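(* Let $j\ge 3$. For $c\in(0,1)$ and $d>0$ let $$v(c,d)=\frac d2\Bigl((c-1)j\ln(1-c)-2c\ln c+(1+c)(2-j)(1-\ln d)\Bigr),$$ and let $\bar\beta_j$ be the unique $d>0$ such that $\sup_{c\in(0,1)}v(c,d)=0$ (equivalently, the positive root of $v(d)$, where $v(d)=\max_{c}v(c,d)$ is attained at $d=(1-c)^{-j/(j-2)}c^{2/(j-2)}$). With $E_{n,j,k}$ as defined in the context, for every $\theta\in(0,1)$ there exists $K<\infty$ such that for all integers $k\ge K$, $$\lim_{n\to\infty,\ k\mid n}\ \sum_{b=1}^{\lfloor \theta\bar\beta_j (k-1)^{-j/(j-2)}n\rfloor}\ \sum_{a=0}^{n-b}E_{n,j,k}\!\left(\tfrac an,\tfrac bn\right)=0.$$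
   Context: Let $g_k(x,y)=(1+x+y)^k-ky-\bigl((1+x)^k-1\bigr)$. For $n$ a multiple of $k$ and integers $a,b\ge0$ with $a+b\le n$, $E_{n,j,k}(a/n,b/n)=\binom{n}{a,\,b,\,n-a-b}S_{n,j,k}(a,b)\big/\binom{nj}{ja,\,jb,\,j(n-a-b)}$ with $S_{n,j,k}(a,b)$ the coefficient of $x^{ja}y^{jb}$ in $g_k(x,y)^{nj/k}$. This is the average number of LM1 stopping sets (for verification decoding on the $q$-ary symmetric channel) with $a$ correct and $b$ incorrect unverified variable nodes in a random $(j,k)$-regular LDPC code of length $n$; the vanishing of the sum means that, with high probability, LM1 corrects all error patterns of size below $\theta\bar\beta_j(k-1)^{-j/(j-2)}n$ when no false verification occurs. *)

theory Defs
  imports "HOL-Analysis.Analysis" "HOL-Computational_Algebra.Polynomial"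
begin

text \<open>Bivariate polynomials in x, y are represented as polynomials in y whose
coefficients are polynomials in x (type real poly poly).
g_k(x,y) = (1+x+y)^k - k y - ((1+x)^k - 1).\<close>
definition g_poly :: "nat \<Rightarrow> real poly poly" where
  "g_poly k = [: [:1, 1:], 1 :] ^ k - [: 0, [: of_nat k :] :]
              - [: [:1, 1:] ^ k - 1 :]"

definition S_coeff :: "nat \<Rightarrow> nat \<Rightarrow> nat \<Rightarrow> nat \<Rightarrow> nat \<Rightarrow> real" where
  "S_coeff n j k a b = coeff (coeff (g_poly k ^ (n * j div k)) (j * b)) (j * a)"

text \<open>Trinomial coefficient n!/(a! b! (n-a-b)!), used for a+b \<le> n.\<close>
definition trinom :: "nat \<Rightarrow> nat \<Rightarrow> nat \<Rightarrow> real" where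
  "trinom n a b = fact n / (fact a * fact b * fact (n - a - b))"

text \<open>E_{n,j,k}(a/n, b/n), written as a function of the integers a, b.\<close>
definition E_val :: "nat \<Rightarrow> nat \<Rightarrow> nat \<Rightarrow> nat \<Rightarrow> nat \<Rightarrow> real" where
  "E_val n j k a b = trinom n a b * S_coeff n j k a b / trinom (n * j) (j * a) (j * b)"

definition v_fun :: "nat \<Rightarrow> real \<Rightarrow> real \<Rightarrow> real" where
  "v_fun j c d = d / 2 * ((c - 1) * real j * ln (1 - c) - 2 * c * ln c
                          + (1 + c) * (2 - real j) * (1 - ln d))"

definition beta_bar :: "nat \<Rightarrow> real" where
  "beta_bar j = (THE d. d > 0 \<and> (SUP c\<in>{0<..<1}. v_fun j c d) = 0)"

end

theory Submission
  imports Defs "HOL-Real_Asymp.Real_Asymp"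
begin


definition ev :: "real \<Rightarrow> real \<Rightarrow> real poly poly \<Rightarrow> real" where
  "ev x y P = poly (map_poly (\<lambda>q. poly q x) P) y"

lemma map_poly_hom_mult:
  fixes f :: "'a::comm_ring_1 \<Rightarrow> 'b::comm_ring_1"
  assumes f0: "f 0 = 0" and fa: "\<And>a b. f (a + b) = f a + f b" and fm: "\<And>a b. f (a * b) = f a * f b"
  shows "map_poly f (p * q) = map_poly f p * map_poly f q"
proof (rule poly_eqI)
  fix n
  have s: "f (sum g A) = (\<Sum>i\<in>A. f (g i))" for g :: "nat \<Rightarrow> 'a" and A
    using sum_comp_morphism[of f g A] f0 fa by (simp add: o_def)
  show "coeff (map_poly f (p * q)) n = coeff (map_poly f p * map_poly f q) n"
    by (simp add: coeff_map_poly f0 coeff_mult s fm)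
qed

lemma map_poly_hom_add:
  assumes f0: "f 0 = 0" and fa: "\<And>a b. f (a + b) = f a + f b"
  shows "map_poly f (p + q) = map_poly f p + map_poly f q"
  by (rule poly_eqI) (simp add: coeff_map_poly f0 fa)

lemma map_poly_hom_diff:
  fixes f :: "'a::comm_ring_1 \<Rightarrow> 'b::comm_ring_1"
  assumes f0: "f 0 = 0" and fa: "\<And>a b. f (a - b) = f a - f b"
  shows "map_poly f (p - q) = map_poly f p - map_poly f q"
  by (rule poly_eqI) (simp add: coeff_map_poly f0 fa)

lemma ev_mult: "ev x y (P * Q) = ev x y P * ev x y Q"
  unfolding ev_def by (subst map_poly_hom_mult) auto

lemma ev_power: "ev x y (P ^ n) = ev x y P ^ n"
proof (induction n)
  case 0 then show ?case by (simp add: ev_def)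
next
  case (Suc n) then show ?case by (simp add: ev_mult)
qed

lemma ev_diff: "ev x y (P - Q) = ev x y P - ev x y Q"
  unfolding ev_def by (subst map_poly_hom_diff) auto

lemma ev_g: "ev x y (g_poly k) = (1+x+y)^k - real k * y - ((1+x)^k - 1)"
  unfolding g_poly_def
  by (simp add: ev_diff ev_power) (simp add: ev_def map_poly_pCons algebra_simps)


definition nn :: "real poly poly \<Rightarrow> bool" where
  "nn P \<longleftrightarrow> (\<forall>t s. 0 \<le> coeff (coeff P t) s)"

lemma nn_mult: "nn P \<Longrightarrow> nn Q \<Longrightarrow> nn (P * Q)"
  unfolding nn_def by (auto simp: coeff_mult coeff_sum intro!: sum_nonneg mult_nonneg_nonneg)

lemma nn_one: "nn 1"
  unfolding nn_def by (auto simp: coeff_1)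

lemma nn_power: "nn P \<Longrightarrow> nn (P ^ n)"
  by (induction n) (auto simp: nn_one nn_mult)

lemma poly_sum_le:
  fixes p :: "real poly"
  assumes "degree p \<le> N" shows "poly p x = (\<Sum>i\<le>N. coeff p i * x ^ i)"
proof -
  have "poly p x = (\<Sum>i\<le>degree p. coeff p i * x ^ i)" by (rule poly_altdef)
  also have "\<dots> = (\<Sum>i\<le>N. coeff p i * x ^ i)"
    by (rule sum.mono_neutral_left) (use assms in \<open>auto simp: coeff_eq_0\<close>)
  finally show ?thesis .
qed

lemma single_le_poly:
  fixes q :: "real poly"
  assumes "\<And>i. 0 \<le> coeff q i" "0 \<le> x"
  shows "coeff q s * x ^ s \<le> poly q x"
proof -
  have "poly q x = (\<Sum>i\<le>max s (degree q). coeff q i * x ^ i)"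
    by (rule poly_sum_le) simp
  also have "coeff q s * x ^ s \<le> \<dots>"
    by (rule member_le_sum) (use assms in auto)
  finally show ?thesis by simp
qed

lemma poly_nonneg_coeffs:
  fixes q :: "real poly"
  assumes "\<And>i. 0 \<le> coeff q i" "0 \<le> x"
  shows "0 \<le> poly q x"
  unfolding poly_altdef using assms by (auto intro!: sum_nonneg)

lemma coeff_le_ev:
  assumes "nn P" "0 \<le> x" "0 \<le> y"
  shows "coeff (coeff P t) s * x ^ s * y ^ t \<le> ev x y P"
proof -
  have c: "0 \<le> coeff (coeff P t) s" for t s using assms(1) by (auto simp: nn_def)
  have pc: "0 \<le> poly (coeff P i) x" for i by (rule poly_nonneg_coeffs) (use c assms in auto)
  have "coeff (coeff P t) s * x ^ s \<le> poly (coeff P t) x"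
    by (rule single_le_poly) (use c assms in auto)
  hence "coeff (coeff P t) s * x ^ s * y ^ t \<le> poly (coeff P t) x * y ^ t"
    using assms by (simp add: mult_right_mono)
  also have "\<dots> = coeff (map_poly (\<lambda>q. poly q x) P) t * y ^ t"
    by (simp add: coeff_map_poly)
  also have "\<dots> \<le> ev x y P"
    unfolding ev_def
    by (rule single_le_poly) (use pc assms in \<open>auto simp: coeff_map_poly\<close>)
  finally show ?thesis .
qed

lemma coeff_nonneg_ev: "nn P \<Longrightarrow> 0 \<le> coeff (coeff P t) s"
  by (auto simp: nn_def)

definition cc :: "real poly" where "cc = [:1, 1:]"

lemma coeff_cc_pow: "coeff (cc ^ i) s = (if s \<le> i then real (i choose s) else 0)"
proof (cases "s \<le> i")
  case True then show ?thesis unfolding cc_def by (simp add: coeff_linear_poly_power)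
next
  case False
  have "degree (cc ^ i) \<le> i" unfolding cc_def
    by (rule order.trans[OF degree_power_le]) simp
  then show ?thesis using False by (auto intro!: coeff_eq_0)
qed

lemma degree_cc_pow: "degree (cc ^ i) \<le> i"
  unfolding cc_def by (rule order.trans[OF degree_power_le]) simp

lemma coeff_g:
  "coeff (g_poly k) t =
     (if t = 0 then 1 else if t = 1 then of_nat k * cc ^ (k - 1) - [:of_nat k:]
      else if t \<le> k then of_nat (k choose t) * cc ^ (k - t) else 0)"
proof -
  have p: "coeff ([:cc, 1:] ^ k) t = (if t \<le> k then of_nat (k choose t) * cc ^ (k - t) else 0)"
  proof (cases "t \<le> k")
    case True then show ?thesis by (simp add: coeff_linear_poly_power)
  next
    case False
    have "degree ([:cc, 1:] ^ k) \<le> k" by (rule order.trans[OF degree_power_le]) simp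
    then show ?thesis using False by (auto intro!: coeff_eq_0)
  qed
  show ?thesis
    unfolding g_poly_def cc_def[symmetric]
    using p by (auto simp: coeff_pCons split: nat.splits)
qed


lemma nn_g: "nn (g_poly k)"
  unfolding nn_def
proof (intro allI)
  fix t s
  have c1: "0 \<le> coeff (cc ^ i) s" for i s by (simp add: coeff_cc_pow)
  show "0 \<le> coeff (coeff (g_poly k) t) s"
  proof (cases "t = 0")
    case True then show ?thesis by (simp add: coeff_g coeff_1)
  next
    case t0: False
    show ?thesis
    proof (cases "t = 1")
      case True
      have "coeff (of_nat k * cc ^ (k - 1) - [:of_nat k:]) s
            = of_nat k * coeff (cc ^ (k - 1)) s - (if s = 0 then of_nat k else 0)"
        by (simp add: of_nat_poly coeff_pCons split: nat.splits)
      moreover have "coeff (cc ^ (k - 1)) 0 = 1" by (simp add: coeff_cc_pow)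
      ultimately show ?thesis using True c1[of "k-1" s]
        by (auto simp: coeff_g)
    next
      case False
      then show ?thesis using t0 c1
        by (auto simp: coeff_g of_nat_poly)
    qed
  qed
qed

definition wb :: "nat \<Rightarrow> real poly poly \<Rightarrow> bool" where
  "wb w P \<longleftrightarrow> (\<forall>t. degree (coeff P t) \<le> w * t)"

lemma wb_mult: "wb w P \<Longrightarrow> wb w Q \<Longrightarrow> wb w (P * Q)"
  unfolding wb_def
proof (intro allI)
  fix t assume P: "\<forall>t. degree (coeff P t) \<le> w * t" and Q: "\<forall>t. degree (coeff Q t) \<le> w * t"
  show "degree (coeff (P * Q) t) \<le> w * t"
    unfolding coeff_mult
  proof (rule degree_sum_le)
    fix i assume "i \<in> {..t}"
    then have "w * i + w * (t - i) = w * t" by (simp add: diff_mult_distrib2)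
    then show "degree (coeff P i * coeff Q (t - i)) \<le> w * t"
      using degree_mult_le[of "coeff P i" "coeff Q (t - i)"] P Q
      by (metis add_le_mono order.trans)
  qed simp
qed

lemma wb_one: "wb w 1"
  unfolding wb_def by (simp add: coeff_1)

lemma wb_power: "wb w P \<Longrightarrow> wb w (P ^ n)"
  by (induction n) (auto simp: wb_one wb_mult)

lemma wb_g: "wb (k - 1) (g_poly k)"
  unfolding wb_def
proof
  fix t
  show "degree (coeff (g_poly k) t) \<le> (k - 1) * t"
  proof (cases "t = 0")
    case True then show ?thesis by (simp add: coeff_g)
  next
    case t0: False
    show ?thesis
    proof (cases "t = 1")
      case True
      have "degree (of_nat k * cc ^ (k - 1) - [:of_nat k:] :: real poly) \<le> k - 1"
        by (rule order.trans[OF degree_diff_le_max])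
           (auto simp: of_nat_poly intro: order.trans[OF degree_smult_le] degree_cc_pow)
      then show ?thesis using True by (simp add: coeff_g)
    next
      case False
      then have "t \<ge> 2" using t0 by simp
      then have "k - 1 \<le> (k - 1) * t" by simp
      then have "k - t \<le> (k - 1) * t" using \<open>t \<ge> 2\<close> by linarith
      moreover have "degree (of_nat (k choose t) * cc ^ (k - t) :: real poly) \<le> k - t"
        by (auto simp: of_nat_poly intro: order.trans[OF degree_smult_le] degree_cc_pow)
      ultimately show ?thesis using t0 False by (auto simp: coeff_g)
    qed
  qed
qed

lemma wb_coeff_zero: "wb w P \<Longrightarrow> w * t < s \<Longrightarrow> coeff (coeff P t) s = 0"
  unfolding wb_def by (meson coeff_eq_0 le_less_trans)


lemma ln_one_plus_inv_ge: "0 < N \<Longrightarrow> 1 / (N + 1) \<le> ln (1 + 1 / (N::real))"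
proof -
  assume N: "0 < N"
  have "ln (1 / (1 + 1 / N)) \<le> 1 / (1 + 1 / N) - 1" by (rule ln_le_minus_one) (use N in \<open>auto intro: add_pos_pos\<close>)
  moreover have "ln (1 / (1 + 1 / N)) = - ln (1 + 1/N)" using N by (simp add: ln_div)
  moreover have "1 / (1 + 1 / N) - 1 = - 1 / (N + 1)" using N by (simp add: field_simps)
  ultimately show ?thesis by simp
qed

lemma ln_fact_lower: "real a * ln (real a) - real a \<le> ln (fact a)"
proof (induction a)
  case 0 then show ?case by simp
next
  case (Suc N)
  have "real N * (ln (real N + 1) - ln (real N)) \<le> 1"
  proof (cases "N = 0")
    case False
    then have e: "1 + 1 / real N = (real N + 1) / real N" by (simp add: field_simps)
    then have "ln (real N + 1) - ln N = ln (1 + 1 / real N)"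
      using False by (simp add: ln_div)
    also have "\<dots> \<le> 1 / real N" by (rule ln_add_one_self_le_self) simp
    finally show ?thesis using False by (simp add: field_simps)
  qed simp
  moreover have "ln (fact (Suc N)) = ln (real N + 1) + ln (fact N)"
    by (simp add: ln_mult add.commute)
  ultimately show ?case using Suc.IH by (simp add: algebra_simps)
qed

lemma ln_fact_upper1: "1 \<le> a \<Longrightarrow> ln (fact a) \<le> 1 + (real a + 1) * ln (real a) - real a"
proof (induction a rule: dec_induct)
  case base then show ?case by simp
next
  case (step N)
  have N: "0 < real N" using step by simp
  have "1 / (real N + 1) \<le> ln (1 + 1 / real N)" by (rule ln_one_plus_inv_ge[OF N])
  also have e: "1 + 1 / real N = (real N + 1) / real N" using N by (simp add: field_simps)
  have "ln (1 + 1 / real N) = ln (real N + 1) - ln N"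
    unfolding e using N by (simp add: ln_div)
  finally have "1 \<le> (real N + 1) * (ln (real N + 1) - ln N)" using N by (simp add: field_simps)
  moreover have "ln (fact (Suc N)) = ln (real N + 1) + ln (fact N)"
    by (simp add: ln_mult add.commute)
  ultimately show ?case using step.IH by (simp add: algebra_simps)
qed

lemma ln_fact_upper: "ln (fact a) \<le> 1 + ln (real a + 1) + real a * ln (real a) - real a"
proof (cases "a = 0")
  case True then show ?thesis by simp
next
  case False
  then have "ln (fact a) \<le> 1 + (real a + 1) * ln (real a) - real a" by (intro ln_fact_upper1) simp
  moreover have "ln (real a) \<le> ln (real a + 1)" using False by simp
  ultimately show ?thesis by (simp add: algebra_simps)
qed

lemma fact_add_ge: "fact m * real m ^ r \<le> fact (m + r)"
proof (induction r)
  case 0 then show ?case by simp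
next
  case (Suc r)
  have "fact m * real m ^ Suc r = (fact m * real m ^ r) * real m" by simp
  also have "\<dots> \<le> fact (m + r) * real (Suc (m + r))"
    by (rule mult_mono) (use Suc in auto)
  also have "\<dots> = fact (m + Suc r)" by (simp add: algebra_simps)
  finally show ?case .
qed

lemma fact_le_pow: "r \<le> n \<Longrightarrow> fact n \<le> fact (n - r) * real n ^ r"
proof (induction r)
  case 0 then show ?case by simp
next
  case (Suc r)
  then have r: "r < n" by simp
  have "fact (n - r) = real (n - r) * fact (n - Suc r)"
    using r by (metis Suc_diff_Suc fact_Suc of_nat_fact)
  then have "fact n \<le> real (n - r) * fact (n - Suc r) * real n ^ r" using Suc r by simp
  also have "\<dots> \<le> real n * fact (n - Suc r) * real n ^ r"
    by (intro mult_right_mono) auto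
  finally show ?case by (simp add: algebra_simps)
qed


lemma taylor2:
  fixes u y :: real
  assumes "0 \<le> u" "0 \<le> y"
  shows "(u+y)^(k+2) - u^(k+2) - real (k+2) * u^(k+1) * y \<le> (real (k+2) * real (k+1) / 2) * y^2 * (u+y)^k"
proof (induction k)
  case 0 then show ?case by (simp add: power2_eq_square algebra_simps)
next
  case (Suc k)
  have id: "(u+y)^(Suc k+2) - u^(Suc k+2) - real (Suc k+2) * u^(Suc k+1) * y
     = (u+y) * ((u+y)^(k+2) - u^(k+2) - real (k+2) * u^(k+1) * y) + real (k+2) * u^(k+1) * y^2"
    by (simp add: algebra_simps power2_eq_square)
  have "(u+y) * ((u+y)^(k+2) - u^(k+2) - real (k+2) * u^(k+1) * y)
        \<le> (u+y) * ((real (k+2) * real (k+1) / 2) * y^2 * (u+y)^k)"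
    by (rule mult_left_mono[OF Suc]) (use assms in simp)
  moreover have "u^(k+1) \<le> (u+y)^(k+1)" by (rule power_mono) (use assms in auto)
  then have "real (k+2) * u^(k+1) * y^2 \<le> real (k+2) * (u+y)^(k+1) * y^2"
    by (intro mult_right_mono mult_left_mono) auto
  ultimately have "(u+y)^(Suc k+2) - u^(Suc k+2) - real (Suc k+2) * u^(Suc k+1) * y
      \<le> (u+y) * ((real (k+2) * real (k+1) / 2) * y^2 * (u+y)^k) + real (k+2) * (u+y)^(k+1) * y^2"
    unfolding id by linarith
  also have "\<dots> = (real (Suc k+2) * real (Suc k+1) / 2) * y^2 * (u+y)^(Suc k)"
    by (simp add: algebra_simps)
  finally show ?case .
qed

definition Mb :: "nat \<Rightarrow> real \<Rightarrow> real \<Rightarrow> real" where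
  "Mb k x y = real k * y * (exp (real (k - 1) * x) - 1)
              + (real k * real (k - 1) / 2) * y^2 * exp (real (k - 2) * (x + y))"

lemma ev_g_bound:
  assumes "2 \<le> k" "0 \<le> x" "0 \<le> y"
  shows "ev x y (g_poly k) \<le> 1 + Mb k x y"
proof -
  obtain l where l: "k = l + 2" using assms(1) by (metis add.commute le_Suc_ex)
  have T: "(1+x+y)^(l+2) - (1+x)^(l+2) - real (l+2) * (1+x)^(l+1) * y
      \<le> (real (l+2) * real (l+1) / 2) * y^2 * (1+x+y)^l"
    using taylor2[of "1+x" y l] assms by simp
  have e1: "(1+x)^(l+1) \<le> exp (real (l+1) * x)"
  proof -
    have "(1+x)^(l+1) \<le> exp x ^ (l+1)"
      by (rule power_mono) (use assms in \<open>auto simp: add.commute\<close>)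
    also have "\<dots> = exp (real (l+1) * x)" by (rule exp_of_nat_mult[symmetric])
    finally show ?thesis .
  qed
  have e2: "(1+x+y)^l \<le> exp (real l * (x + y))"
  proof -
    have "(1+x+y)^l \<le> exp (x+y) ^ l"
      by (rule power_mono) (use assms exp_ge_add_one_self[of "x+y"] in \<open>auto simp: add.commute add.left_commute\<close>)
    also have "\<dots> = exp (real l * (x+y))" by (rule exp_of_nat_mult[symmetric])
    finally show ?thesis .
  qed
  define E1 where "E1 = exp (real (k - 1) * x)"
  define E2 where "E2 = exp (real (k - 2) * (x + y))"
  have k1: "k - 1 = l + 1" "k - 2 = l" using l by auto
  have A: "real k * (1+x)^(k-1) * y \<le> real k * E1 * y"
    using e1 assms unfolding E1_def k1 by (intro mult_right_mono mult_left_mono) auto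
  have B: "(real k * real (k-1) / 2) * y^2 * (1+x+y)^(k-2)
      \<le> (real k * real (k-1) / 2) * y^2 * E2"
    using e2 assms unfolding E2_def k1 by (intro mult_left_mono) auto
  have T': "(1+x+y)^k - (1+x)^k - real k * (1+x)^(k-1) * y
      \<le> (real k * real (k-1) / 2) * y^2 * (1+x+y)^(k-2)"
    using T unfolding l by (simp add: k1[unfolded l])
  have M: "Mb k x y = real k * E1 * y - real k * y + (real k * real (k-1) / 2) * y^2 * E2"
    unfolding Mb_def E1_def E2_def by (simp add: algebra_simps)
  show ?thesis unfolding ev_g M using A B T' by linarith
qed

lemma pow_exp_ln: "0 < (y::real) \<Longrightarrow> y ^ n = exp (real n * ln y)"
  by (simp add: exp_of_nat_mult)

lemma S_bound:
  assumes k: "2 \<le> k" and x: "0 \<le> x" and y: "0 < y" and ax: "a = 0 \<or> 0 < x"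
  shows "S_coeff n j k a b \<le> exp (real (n * j div k) * Mb k x y - real (j*a) * ln x - real (j*b) * ln y)"
proof -
  define m where "m = n * j div k"
  define G where "G = g_poly k"
  have nnG: "nn (G ^ m)" unfolding G_def by (intro nn_power nn_g)
  have c: "S_coeff n j k a b * x ^ (j*a) * y ^ (j*b) \<le> ev x y (G ^ m)"
    unfolding S_coeff_def m_def[symmetric] G_def[symmetric]
    by (rule coeff_le_ev[OF nnG x]) (use y in simp)
  have ev0: "1 \<le> ev x y G"
    using coeff_le_ev[of G x y 0 0] y x unfolding G_def by (simp add: nn_g coeff_g coeff_1)
  have "ev x y G \<le> exp (Mb k x y)"
    using ev_g_bound[OF k x, of y] y exp_ge_add_one_self[of "Mb k x y"] unfolding G_def by linarith
  then have "ev x y (G ^ m) \<le> exp (Mb k x y) ^ m"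
    unfolding ev_power by (rule power_mono) (use ev0 in simp)
  also have "\<dots> = exp (real m * Mb k x y)" by (simp add: exp_of_nat_mult)
  finally have c2: "S_coeff n j k a b * (x ^ (j*a) * y ^ (j*b)) \<le> exp (real m * Mb k x y)"
    using c by (simp add: mult.assoc)
  have xy: "x ^ (j*a) * y ^ (j*b) = exp (real (j*a) * ln x + real (j*b) * ln y)"
  proof (cases "a = 0")
    case True then show ?thesis using y pow_exp_ln[of y "j*b"] by simp
  next
    case False then have "0 < x" using ax by simp
    then show ?thesis using y pow_exp_ln[of y "j*b"] pow_exp_ln[of x "j*a"] by (simp add: exp_add)
  qed
  have "S_coeff n j k a b \<le> exp (real m * Mb k x y) / exp (real (j*a) * ln x + real (j*b) * ln y)"
    using c2 unfolding xy by (simp add: pos_le_divide_eq)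
  then show ?thesis unfolding m_def by (simp add: exp_diff[symmetric] algebra_simps)
qed

lemma S_nonneg: "0 \<le> S_coeff n j k a b"
  unfolding S_coeff_def by (intro coeff_nonneg_ev nn_power nn_g)

lemma S_zero: "(k - 1) * (j * b) < j * a \<Longrightarrow> S_coeff n j k a b = 0"
  unfolding S_coeff_def by (intro wb_coeff_zero[of "k-1"] wb_power wb_g)


lemma xlnx_mult: "real (j*a) * ln (real (j*a)) = real j * real a * ln (real j) + real j * (real a * ln (real a))"
proof (cases "a = 0 \<or> j = 0")
  case True then show ?thesis by auto
next
  case False then show ?thesis by (simp add: ln_mult algebra_simps)
qed

definition Rr :: "nat \<Rightarrow> nat \<Rightarrow> nat \<Rightarrow> nat \<Rightarrow> real" where
  "Rr n j a b = 2 + ln (real (j*a) + 1) + ln (real (j*b) + 1)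
     + (real j - 1) * (real a * ln (real a) - real a) + (real j - 1) * (real b * ln (real b) - real b)
     + (real a + real b) * ln (real n) - real j * (real a + real b) * ln (real n - real a - real b)"

lemma ratio_bound:
  assumes ab: "a + b < n" and j: "1 \<le> j"
  shows "trinom n a b / trinom (n*j) (j*a) (j*b) \<le> exp (Rr n j a b)"
proof -
  define m where "m = j * (n - a - b)"
  have nm: "n * j - j * a - j * b = m" unfolding m_def using ab by (simp add: algebra_simps diff_mult_distrib2)
  have mpos: "0 < m" unfolding m_def using ab j by simp
  have mr: "m + j * (a + b) = n * j"
  proof -
    have "n - a - b + (a+b) = n" using ab by simp
    then have "j * (n - a - b + (a+b)) = j * n" by simp
    then show ?thesis unfolding m_def add_mult_distrib2 by (simp add: mult.commute)
  qed
  have lnm: "ln (real m) = ln (real j) + ln (real n - real a - real b)"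
    unfolding m_def using ab j by (simp add: ln_mult of_nat_diff)
  have fp: "\<And>q. 0 < (fact q :: real)" by simp
  have t1: "ln (trinom n a b) = ln (fact n) - ln (fact a) - ln (fact b) - ln (fact (n - a - b))"
    unfolding trinom_def by (simp add: ln_div ln_mult)
  have t2: "ln (trinom (n*j) (j*a) (j*b)) = ln (fact (n*j)) - ln (fact (j*a)) - ln (fact (j*b)) - ln (fact m)"
    unfolding trinom_def nm by (simp add: ln_div ln_mult)
  have f1: "ln (fact n) \<le> ln (fact (n - a - b)) + (real a + real b) * ln (real n)"
  proof -
    have "fact n \<le> fact (n - (a+b)) * real n ^ (a+b)" by (rule fact_le_pow) (use ab in simp)
    then have "ln (fact n) \<le> ln (fact (n - (a+b)) * real n ^ (a+b))"
      using ab by (subst ln_le_cancel_iff) auto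
    also have "\<dots> = ln (fact (n - a - b)) + (real a + real b) * ln (real n)"
      using ab by (simp add: ln_mult ln_realpow)
    finally show ?thesis .
  qed
  have f2: "ln (fact m) + real (j * (a+b)) * ln (real m) \<le> ln (fact (n*j))"
  proof -
    have "fact m * real m ^ (j*(a+b)) \<le> fact (n*j)" using fact_add_ge[of m "j*(a+b)"] mr by simp
    then have "ln (fact m * real m ^ (j*(a+b))) \<le> ln (fact (n*j))"
      using mpos by (subst ln_le_cancel_iff) auto
    then show ?thesis using mpos by (simp add: ln_mult ln_realpow)
  qed
  have ua: "ln (fact (j*a)) \<le> 1 + ln (real (j*a) + 1) + real j * real a * ln (real j) + real j * (real a * ln (real a)) - real j * real a"
    using ln_fact_upper[of "j*a"] xlnx_mult[of j a] by simp
  have ub: "ln (fact (j*b)) \<le> 1 + ln (real (j*b) + 1) + real j * real b * ln (real j) + real j * (real b * ln (real b)) - real j * real b"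
    using ln_fact_upper[of "j*b"] xlnx_mult[of j b] by simp
  have la: "real a * ln (real a) - real a \<le> ln (fact a)" by (rule ln_fact_lower)
  have lb: "real b * ln (real b) - real b \<le> ln (fact b)" by (rule ln_fact_lower)
  have pos1: "0 < trinom n a b" unfolding trinom_def by simp
  have pos2: "0 < trinom (n*j) (j*a) (j*b)" unfolding trinom_def by simp
  have "ln (trinom n a b / trinom (n*j) (j*a) (j*b)) = ln (trinom n a b) - ln (trinom (n*j) (j*a) (j*b))"
    using pos1 pos2 by (simp add: ln_div)
  also have "\<dots> \<le> Rr n j a b"
    unfolding t1 t2 Rr_def using f1 f2 ua ub la lb lnm
    by (simp add: algebra_simps) 
  finally have L: "ln (trinom n a b / trinom (n*j) (j*a) (j*b)) \<le> Rr n j a b" .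
  have "0 < trinom n a b / trinom (n*j) (j*a) (j*b)" using pos1 pos2 by simp
  then show ?thesis using L by (metis exp_le_cancel_iff exp_ln)
qed


definition Fj :: "nat \<Rightarrow> real \<Rightarrow> real \<Rightarrow> real" where
  "Fj j c L = (c - 1) * real j * ln (1 - c) - 2 * c * ln c + (1 + c) * (2 - real j) * (1 - L)"

lemma v_fun_Fj: "v_fun j c d = d / 2 * Fj j c (ln d)"
  unfolding v_fun_def Fj_def by simp

lemma ulnu_bounds: "0 < (u::real) \<Longrightarrow> u < 1 \<Longrightarrow> 0 \<le> - u * ln u \<and> - u * ln u \<le> 1"
proof -
  assume u: "0 < u" "u < 1"
  have "ln u < ln 1" using u by (subst ln_less_cancel_iff) auto
  then have "ln u < 0" by simp
  then have a: "0 \<le> - u * ln u" using u by (simp add: mult_nonneg_nonpos)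
  have "ln (1/u) \<le> 1/u - 1" by (rule ln_le_minus_one) (use u in simp)
  then have "- ln u \<le> 1/u - 1" using u by (simp add: ln_div)
  then have "u * (- ln u) \<le> u * (1/u - 1)" using u by (intro mult_left_mono) auto
  also have "\<dots> = 1 - u" using u by (simp add: field_simps)
  finally show ?thesis using a u by simp
qed

definition Aj :: "nat \<Rightarrow> real \<Rightarrow> real" where
  "Aj j c = (c - 1) * real j * ln (1 - c) - 2 * c * ln c"

lemma Fj_Aj: "Fj j c L = Aj j c + (1 + c) * (2 - real j) * (1 - L)"
  unfolding Fj_def Aj_def by simp

lemma Aj_bounds:
  assumes "0 < c" "c < 1"
  shows "0 \<le> Aj j c \<and> Aj j c \<le> real j + 2"
proof -
  have 1: "0 \<le> - (1-c) * ln (1-c) \<and> - (1-c) * ln (1-c) \<le> 1" by (rule ulnu_bounds) (use assms in auto)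
  have 2: "0 \<le> - c * ln c \<and> - c * ln c \<le> 1" by (rule ulnu_bounds) (use assms in auto)
  have e: "Aj j c = real j * (- (1-c) * ln (1-c)) + 2 * (- c * ln c)"
    unfolding Aj_def by (simp add: algebra_simps)
  have "real j * (- (1-c) * ln (1-c)) \<le> real j * 1" using 1 by (intro mult_left_mono) auto
  moreover have "0 \<le> real j * (- (1-c) * ln (1-c))" using 1 by simp
  ultimately show ?thesis using 2 unfolding e by linarith
qed

definition Gj :: "nat \<Rightarrow> real \<Rightarrow> real" where
  "Gj j L = (SUP c\<in>{0<..<1}. Fj j c L)"

lemma Fj_upper:
  assumes "3 \<le> j" "0 < c" "c < 1"
  shows "Fj j c L \<le> real j + 2 + 2 * (real j - 2) * \<bar>1 - L\<bar>"
proof -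
  have "(1 + c) * (2 - real j) * (1 - L) \<le> \<bar>(1 + c) * (2 - real j) * (1 - L)\<bar>" by simp
  also have "\<dots> = (1 + c) * (real j - 2) * \<bar>1 - L\<bar>" using assms by (simp add: abs_mult)
  also have "\<dots> \<le> 2 * (real j - 2) * \<bar>1 - L\<bar>" using assms by (intro mult_right_mono) auto
  finally show ?thesis using Aj_bounds[OF assms(2,3), of j] unfolding Fj_Aj by linarith
qed

lemma bdd_Fj: "3 \<le> j \<Longrightarrow> bdd_above ((\<lambda>c. Fj j c L) ` {0<..<1})"
proof -
  assume j: "3 \<le> j"
  show ?thesis
  proof (rule bdd_aboveI2[where M = "real j + 2 + 2 * (real j - 2) * \<bar>1 - L\<bar>"])
    fix c :: real assume "c \<in> {0<..<1}"
    then show "Fj j c L \<le> real j + 2 + 2 * (real j - 2) * \<bar>1 - L\<bar>" using Fj_upper[OF j] by simp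
  qed
qed

lemma Fj_diff: "Fj j c L1 - Fj j c L2 = (1 + c) * (real j - 2) * (L1 - L2)"
  unfolding Fj_def by (simp add: algebra_simps)

lemma Gj_upper: "3 \<le> j \<Longrightarrow> 0 < c \<Longrightarrow> c < 1 \<Longrightarrow> Fj j c L \<le> Gj j L"
  unfolding Gj_def by (rule cSUP_upper) (auto intro: bdd_Fj)

lemma Gj_least: "(\<And>c. 0 < c \<Longrightarrow> c < 1 \<Longrightarrow> Fj j c L \<le> M) \<Longrightarrow> Gj j L \<le> M"
  unfolding Gj_def by (rule cSUP_least) auto

lemma Gj_lip:
  assumes j: "3 \<le> j"
  shows "Gj j L1 \<le> Gj j L2 + 2 * (real j - 2) * \<bar>L1 - L2\<bar>"
proof (rule Gj_least)
  fix c :: real assume c: "0 < c" "c < 1"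
  have "Fj j c L1 - Fj j c L2 \<le> \<bar>(1 + c) * (real j - 2) * (L1 - L2)\<bar>" unfolding Fj_diff by simp
  also have "\<dots> = (1 + c) * (real j - 2) * \<bar>L1 - L2\<bar>" using c j by (simp add: abs_mult)
  also have "\<dots> \<le> 2 * (real j - 2) * \<bar>L1 - L2\<bar>" using c j by (intro mult_right_mono) auto
  finally show "Fj j c L1 \<le> Gj j L2 + 2 * (real j - 2) * \<bar>L1 - L2\<bar>"
    using Gj_upper[OF j c, of L2] by linarith
qed

lemma Gj_mono:
  assumes j: "3 \<le> j" and L: "L1 \<le> L2"
  shows "Gj j L1 + (real j - 2) * (L2 - L1) \<le> Gj j L2"
proof -
  have "Gj j L1 \<le> Gj j L2 - (real j - 2) * (L2 - L1)"
  proof (rule Gj_least)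
    fix c :: real assume c: "0 < c" "c < 1"
    have "(real j - 2) * (L2 - L1) \<le> (1 + c) * (real j - 2) * (L2 - L1)"
      using c j L by (simp add: mult_right_mono)
    then have "Fj j c L1 + (real j - 2) * (L2 - L1) \<le> Fj j c L2" using Fj_diff[of j c L2 L1] by linarith
    then show "Fj j c L1 \<le> Gj j L2 - (real j - 2) * (L2 - L1)" using Gj_upper[OF j c, of L2] by linarith
  qed
  then show ?thesis by linarith
qed

lemma Gj_cont: "3 \<le> j \<Longrightarrow> continuous_on S (Gj j)"
proof -
  assume j: "3 \<le> j"
  have "(2 * (real j - 2))-lipschitz_on S (Gj j)"
  proof (rule lipschitz_onI)
    fix x y assume "x \<in> S" "y \<in> S"
    have "Gj j x - Gj j y \<le> 2 * (real j - 2) * \<bar>x - y\<bar>" using Gj_lip[OF j, of x y] by linarith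
    moreover have "Gj j y - Gj j x \<le> 2 * (real j - 2) * \<bar>x - y\<bar>" using Gj_lip[OF j, of y x] by (simp add: abs_minus_commute)
    ultimately show "dist (Gj j x) (Gj j y) \<le> 2 * (real j - 2) * dist x y"
      by (simp add: dist_real_def abs_le_iff)
  next
    show "0 \<le> 2 * (real j - 2)" using j by simp
  qed
  then show ?thesis by (rule lipschitz_on_continuous_on)
qed

lemma SUP_v: 
  assumes j: "3 \<le> j" and d: "0 < d"
  shows "(SUP c\<in>{0<..<1}. v_fun j c d) = d / 2 * Gj j (ln d)"
proof (rule antisym)
  show "(SUP c\<in>{0<..<1}. v_fun j c d) \<le> d / 2 * Gj j (ln d)"
    by (rule cSUP_least) (auto simp: v_fun_Fj d intro!: mult_left_mono Gj_upper[OF j])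
next
  have bdd: "bdd_above ((\<lambda>c. v_fun j c d) ` {0<..<1})"
    by (rule bdd_aboveI2[where M = "d / 2 * Gj j (ln d)"]) (auto simp: v_fun_Fj d intro!: mult_left_mono Gj_upper[OF j])
  have "Gj j (ln d) \<le> 2 / d * (SUP c\<in>{0<..<1}. v_fun j c d)"
  proof (rule Gj_least)
    fix c :: real assume c: "0 < c" "c < 1"
    have "v_fun j c d \<le> (SUP c\<in>{0<..<1}. v_fun j c d)" by (rule cSUP_upper) (use c bdd in auto)
    then show "Fj j c (ln d) \<le> 2 / d * (SUP c\<in>{0<..<1}. v_fun j c d)"
      using d by (simp add: v_fun_Fj field_simps)
  qed
  then show "d / 2 * Gj j (ln d) \<le> (SUP c\<in>{0<..<1}. v_fun j c d)"
    using d by (simp add: field_simps)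
qed

lemma beta_exists_unique:
  assumes j: "3 \<le> j"
  shows "\<exists>!d. d > 0 \<and> (SUP c\<in>{0<..<1}. v_fun j c d) = 0"
proof -
  define L0 where "L0 = 1 - (real j + 2) / (real j - 2)"
  have jr: "real j - 2 > 0" using j by simp
  have g0: "Gj j L0 \<le> 0"
  proof (rule Gj_least)
    fix c :: real assume c: "0 < c" "c < 1"
    have "(1 + c) * (2 - real j) * (1 - L0) = - (1 + c) * (real j + 2)"
      unfolding L0_def using jr by (simp add: field_simps)
    also have "\<dots> \<le> - (real j + 2)" using c by (simp add: algebra_simps)
    finally show "Fj j c L0 \<le> 0" using Aj_bounds[OF c, of j] unfolding Fj_Aj by linarith
  qed
  have g1: "0 \<le> Gj j 1"
    using Gj_upper[OF j, of "1/2" 1] Aj_bounds[of "1/2" j] by (simp add: Fj_Aj)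
  have "L0 \<le> 1" unfolding L0_def using jr by simp
  then obtain L where L: "Gj j L = 0"
    using IVT'[of "Gj j" L0 0 1] g0 g1 Gj_cont[OF j] by blast
  show ?thesis
  proof (rule ex_ex1I)
    show "\<exists>d. d > 0 \<and> (SUP c\<in>{0<..<1}. v_fun j c d) = 0"
      by (rule exI[of _ "exp L"]) (simp add: SUP_v[OF j] L)
  next
    fix d1 d2 assume 1: "d1 > 0 \<and> (SUP c\<in>{0<..<1}. v_fun j c d1) = 0"
      and 2: "d2 > 0 \<and> (SUP c\<in>{0<..<1}. v_fun j c d2) = 0"
    have "d1 / 2 * Gj j (ln d1) = 0" using 1 SUP_v[OF j, of d1] by linarith
    then have z1: "Gj j (ln d1) = 0" using 1 by simp
    have "d2 / 2 * Gj j (ln d2) = 0" using 2 SUP_v[OF j, of d2] by linarith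
    then have z2: "Gj j (ln d2) = 0" using 2 by simp
    have "ln d1 = ln d2"
    proof (rule ccontr)
      assume ne: "ln d1 \<noteq> ln d2"
      show False
      proof (cases "ln d1 < ln d2")
        case True
        then show False using Gj_mono[OF j, of "ln d1" "ln d2"] z1 z2 jr
          by (smt (verit) mult_pos_pos)
      next
        case False
        then have "ln d2 < ln d1" using ne by simp
        then show False using Gj_mono[OF j, of "ln d2" "ln d1"] z1 z2 jr
          by (smt (verit) mult_pos_pos)
      qed
    qed
    then show "d1 = d2" using 1 2 by simp
  qed
qed

lemma beta_props:
  assumes j: "3 \<le> j"
  shows "0 < beta_bar j" "ln (beta_bar j) \<le> 1" "\<And>c. 0 \<le> c \<Longrightarrow> c < 1 \<Longrightarrow> Fj j c (ln (beta_bar j)) \<le> 0"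
proof -
  have P: "beta_bar j > 0 \<and> (SUP c\<in>{0<..<1}. v_fun j c (beta_bar j)) = 0"
    unfolding beta_bar_def by (rule theI'[OF beta_exists_unique[OF j]])
  then show b0: "0 < beta_bar j" by simp
  have "beta_bar j / 2 * Gj j (ln (beta_bar j)) = 0" using P SUP_v[OF j b0] by linarith
  then have G0: "Gj j (ln (beta_bar j)) = 0" using b0 by simp
  have F0: "Fj j c (ln (beta_bar j)) \<le> 0" if "0 < c" "c < 1" for c
    using Gj_upper[OF j that, of "ln (beta_bar j)"] G0 by simp
  have jr: "real j - 2 > 0" using j by simp
  show l1: "ln (beta_bar j) \<le> 1"
  proof (rule ccontr)
    assume "\<not> ln (beta_bar j) \<le> 1"
    then have "0 < (1 + 1/2) * (real j - 2) * (ln (beta_bar j) - 1)" using jr by simp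
    moreover have "Fj j (1/2) (ln (beta_bar j)) = Aj j (1/2) + (1 + 1/2) * (real j - 2) * (ln (beta_bar j) - 1)"
      unfolding Fj_Aj by (simp add: algebra_simps)
    ultimately show False using F0[of "1/2"] Aj_bounds[of "1/2" j] by simp
  qed
  fix c :: real assume c: "0 \<le> c" "c < 1"
  show "Fj j c (ln (beta_bar j)) \<le> 0"
  proof (cases "c = 0")
    case True
    then show ?thesis using l1 jr by (simp add: Fj_def mult_nonpos_nonneg)
  next
    case False then show ?thesis using F0 c by simp
  qed
qed


definition Mbr :: "real \<Rightarrow> real \<Rightarrow> real \<Rightarrow> real" where
  "Mbr K x y = K * y * (exp ((K - 1) * x) - 1) + (K * (K - 1) / 2) * y^2 * exp ((K - 2) * (x + y))"

definition Psi :: "real \<Rightarrow> real \<Rightarrow> real \<Rightarrow> real \<Rightarrow> real \<Rightarrow> real \<Rightarrow> real \<Rightarrow> real" where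
  "Psi J K N A B x y = (J - 1) * (A * ln A - A) + (J - 1) * (B * ln B - B) + (A + B) * ln N
     - J * (A + B) * ln (N - A - B) + (N * J / K) * Mbr K x y - J * A * ln x - J * B * ln y"

lemma exp_minus_one_le: "0 \<le> t \<Longrightarrow> exp t - 1 \<le> t * exp (t::real)"
proof -
  assume t: "0 \<le> t"
  have "1 - t \<le> exp (- t)" using exp_ge_add_one_self[of "-t"] by simp
  then have "(1 - t) * exp t \<le> exp (-t) * exp t" by (intro mult_right_mono) auto
  then show ?thesis by (simp add: exp_minus field_simps)
qed

lemma ln_NAB:
  fixes N A B :: real
  assumes N: "0 < N" and t: "0 \<le> A + B" "(A + B) / N \<le> 1/2"
  shows "ln N - 2 * ((A + B) / N) \<le> ln (N - A - B)"
proof -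
  define s where "s = (A + B) / N"
  have s: "0 \<le> s" "s \<le> 1/2" using t N unfolding s_def by auto
  have "- s - 2 * s^2 \<le> ln (1 - s)" by (rule ln_one_minus_pos_lower_bound) (use s in auto)
  moreover have "s * (2 * s) \<le> s * 1" using s by (intro mult_left_mono) auto
  then have "s^2 \<le> s / 2" by (simp add: power2_eq_square)
  ultimately have l: "- 2 * s \<le> ln (1 - s)" by linarith
  have "N - A - B = N * (1 - s)" unfolding s_def using N by (simp add: field_simps)
  moreover have "0 < 1 - s" using s by simp
  ultimately have "ln (N - A - B) = ln N + ln (1 - s)" using N by (simp add: ln_mult)
  then have "ln N - 2 * s \<le> ln (N - A - B)" using l by linarith
  then show ?thesis unfolding s_def .
qed

lemma M1_bound:
  fixes J p \<eta> Lb D :: real and j :: nat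
  assumes J: "J = real j" "3 \<le> j" and p: "0 \<le> p" and eta: "0 < \<eta>" "ln \<eta> \<le> -1"
    and Lb: "Lb \<le> 1" and F: "\<And>c. 0 \<le> c \<Longrightarrow> c < 1 \<Longrightarrow> Fj j c Lb \<le> 0" and D: "D \<le> 0"
    and z: "\<zeta> = max (1 - p) \<eta>"
  shows "(p + 1) * ((J - 2) / 2) * (D + Lb) - p * ln p - (J - 1) * (p + 1) + (J / 2) * (p - 1) * ln \<zeta>
          + J * (p + \<zeta> / 2) \<le> ((J - 2) / 2) * D + J * \<eta> / 2"
proof -
  have J3: "3 \<le> J" using J by simp
  have pD: "(p + 1) * ((J - 2) / 2) * D \<le> ((J - 2) / 2) * D"
  proof -
    have "p * (((J - 2) / 2) * D) \<le> 0" using p J3 D by (intro mult_nonneg_nonpos) auto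
    moreover have "(p + 1) * ((J - 2) / 2) * D = ((J - 2) / 2) * D + p * (((J - 2) / 2) * D)"
      by (simp add: field_simps)
    ultimately show ?thesis by linarith
  qed
  show ?thesis
  proof (cases "p < 1")
    case True
    have Fp: "Fj j p Lb \<le> 0" using F[OF p True] .
    have zp: "1 - p \<le> \<zeta>" "\<zeta> - (1 - p) \<le> \<eta>" using z eta True by auto
    have lz: "ln (1 - p) \<le> ln \<zeta>" using zp True by simp
    have lz2: "(J / 2) * (p - 1) * ln \<zeta> \<le> (J / 2) * (p - 1) * ln (1 - p)"
    proof -
      have "(J / 2) * (1 - p) * ln (1 - p) \<le> (J / 2) * (1 - p) * ln \<zeta>"
        using lz True J3 by (intro mult_left_mono) auto
      moreover have "\<And>w. (J / 2) * (p - 1) * w = - ((J / 2) * (1 - p) * w)" by (simp add: field_simps)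
      ultimately show ?thesis by (metis neg_le_iff_le)
    qed
    have Fe: "Fj j p Lb = (p - 1) * J * ln (1 - p) - 2 * p * ln p + (1 + p) * (2 - J) * (1 - Lb)"
      unfolding Fj_def J by simp
    have "(p + 1) * ((J - 2) / 2) * (D + Lb) - p * ln p - (J - 1) * (p + 1) + (J / 2) * (p - 1) * ln (1 - p)
          + J * (p + \<zeta> / 2) = Fj j p Lb / 2 + (p + 1) * ((J - 2) / 2) * D + (J / 2) * (\<zeta> - (1 - p))"
      unfolding Fe by (simp add: field_simps)
    moreover have "(J / 2) * (\<zeta> - (1 - p)) \<le> J * \<eta> / 2" using zp J3 by simp
    ultimately show ?thesis using Fp pD lz2 by linarith
  next
    case False
    then have ze: "\<zeta> = \<eta>" using z eta by auto
    have a1: "(p + 1) * ((J - 2) / 2) * Lb \<le> (p + 1) * ((J - 2) / 2)"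
      using Lb p J3 by (intro mult_left_mono[of Lb 1, simplified]) auto
    have a2: "(J / 2) * (p - 1) * ln \<eta> \<le> - (J / 2) * (p - 1)"
    proof -
      have "(J / 2) * (p - 1) * ln \<eta> \<le> (J / 2) * (p - 1) * (-1)"
        using eta False J3 by (intro mult_left_mono) auto
      then show ?thesis by simp
    qed
    have a3: "0 \<le> p * ln p" using False by simp
    have "(p + 1) * ((J - 2) / 2) * (D + Lb) - p * ln p - (J - 1) * (p + 1) + (J / 2) * (p - 1) * ln \<zeta>
          + J * (p + \<zeta> / 2)
        = (p + 1) * ((J - 2) / 2) * D + (p + 1) * ((J - 2) / 2) * Lb - p * ln p - (J - 1) * (p + 1)
          + (J / 2) * (p - 1) * ln \<eta> + J * p + J * \<eta> / 2"
      unfolding ze by (simp add: field_simps)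
    moreover have "(p + 1) * ((J - 2) / 2) - (J - 1) * (p + 1) + J * p - (J / 2) * (p - 1) = 0"
      by (simp add: field_simps)
    ultimately show ?thesis using pD a1 a2 a3 by linarith
  qed
qed


lemma reg1_Psi:
  fixes J K N B p \<eta> \<zeta> Z S \<sigma> x y \<tau> :: real
  assumes J: "3 \<le> J" and K: "2 \<le> K" and N: "0 < N" and B: "0 < B" and p: "0 \<le> p"
    and eta: "0 < \<eta>"
    and z: "\<zeta> = max (1 - p) \<eta>" and Zd: "Z = sqrt \<zeta>" and Sd: "S = p / Z"
    and sg: "\<sigma> = sqrt (B / (K * N))" and xd: "x = \<sigma> * S" and yd: "y = \<sigma> * Z"
    and td: "\<tau> = sqrt (K * B / N)" and small: "(p + 1) * B / N \<le> 1/2"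
  shows "Psi J K N (p * B) B x y \<le> B * ((p + 1) * (((J - 2) / 2) * (ln B - ln N) + (J / 2) * ln K)
          - p * ln p - (J - 1) * (p + 1) + (J / 2) * (p - 1) * ln \<zeta>
          + J * (p + \<zeta> / 2) * exp (\<tau> * (S + Z)) + 2 * J * (p + 1)^2 * B / N)"
proof -
  have zp: "0 < \<zeta>" using z eta by auto
  have Zp: "0 < Z" using zp Zd by simp
  have Z2: "Z^2 = \<zeta>" using zp Zd by simp
  have SZ: "S * Z = p" using Zp Sd by simp
  have Sn: "0 \<le> S" using Sd p Zp by simp
  have sp: "0 < \<sigma>" using sg B N K by simp
  have s2: "\<sigma>^2 = B / (K * N)" using sg B N K by simp
  have Ks: "K * \<sigma> = \<tau>"
  proof -
    have "(K * \<sigma>)^2 = K * B / N" using s2 K N by (simp add: power_mult_distrib field_simps power2_eq_square)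
    then have "sqrt (K * B / N) = sqrt ((K * \<sigma>)^2)" by simp
    also have "\<dots> = K * \<sigma>" using sp K by simp
    finally show ?thesis using td by simp
  qed
  have x0: "0 \<le> x" using xd sp Sn by simp
  have y0: "0 < y" using yd sp Zp by simp
  define E where "E = exp (K * (x + y))"
  have Eeq: "E = exp (\<tau> * (S + Z))" unfolding E_def xd yd Ks[symmetric] by (simp add: algebra_simps)
  have Mb1: "K * y * (exp ((K - 1) * x) - 1) \<le> K^2 * (x * y) * E"
  proof -
    have "exp ((K - 1) * x) - 1 \<le> (K - 1) * x * exp ((K - 1) * x)"
      by (rule exp_minus_one_le) (use K x0 in simp)
    also have "\<dots> \<le> K * x * E"
      unfolding E_def using K x0 y0 by (intro mult_mono) (auto simp: algebra_simps mult_right_mono)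
    finally have "K * y * (exp ((K - 1) * x) - 1) \<le> K * y * (K * x * E)"
      using K y0 by (intro mult_left_mono) auto
    then show ?thesis by (simp add: power2_eq_square algebra_simps)
  qed
  have Mb2: "(K * (K - 1) / 2) * y^2 * exp ((K - 2) * (x + y)) \<le> K^2 / 2 * y^2 * E"
  proof -
    have "exp ((K - 2) * (x + y)) \<le> E" unfolding E_def using x0 y0 K
      by (simp add: mult_right_mono)
    moreover have "K * (K - 1) / 2 \<le> K^2 / 2" using K by (simp add: power2_eq_square algebra_simps)
    ultimately show ?thesis using K by (intro mult_mono) (auto simp: zero_le_mult_iff)
  qed
  have Mb: "Mbr K x y \<le> K^2 * \<sigma>^2 * (p + \<zeta> / 2) * E"
  proof -
    have "Mbr K x y \<le> K^2 * (x * y) * E + K^2 / 2 * y^2 * E" unfolding Mbr_def using Mb1 Mb2 by linarith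
    also have "x * y = \<sigma>^2 * p" unfolding xd yd using SZ by (simp add: power2_eq_square algebra_simps)
    also have "y^2 = \<sigma>^2 * \<zeta>" unfolding yd using Z2 by (simp add: power_mult_distrib)
    finally show ?thesis by (simp add: field_simps)
  qed
  have mM: "(N * J / K) * Mbr K x y \<le> J * B * (p + \<zeta> / 2) * E"
  proof -
    have "(N * J / K) * Mbr K x y \<le> (N * J / K) * (K^2 * \<sigma>^2 * (p + \<zeta> / 2) * E)"
      using Mb N J K by (intro mult_left_mono) auto
    also have "\<dots> = J * B * (p + \<zeta> / 2) * E" unfolding s2 using N K by (simp add: field_simps power2_eq_square)
    finally show ?thesis .
  qed
  have lnab: "ln N - 2 * ((p * B + B) / N) \<le> ln (N - p * B - B)"
    by (rule ln_NAB[OF N]) (use p B small in \<open>auto simp: algebra_simps\<close>)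
  have lnab2: "J * (p * B + B) * (ln N - 2 * ((p * B + B) / N)) \<le> J * (p * B + B) * ln (N - p * B - B)"
    using lnab J p B by (intro mult_left_mono) auto
  have lsig: "ln \<sigma> = (ln B - ln K - ln N) / 2"
    unfolding sg using B N K by (simp add: ln_sqrt ln_div ln_mult)
  have lZ: "ln Z = ln \<zeta> / 2" unfolding Zd using zp by (simp add: ln_sqrt)
  have f1: "p * B * ln (p * B) = p * B * (ln p + ln B)"
    by (cases "p = 0") (use p B in \<open>auto simp: ln_mult\<close>)
  have f4: "J * (p * B) * ln x = J * p * B * ((ln B - ln K - ln N) / 2 + ln p - ln \<zeta> / 2)"
  proof (cases "p = 0")
    case False
    then have "0 < p" using p by simp
    then have "ln x = ln \<sigma> + ln p - ln Z" unfolding xd Sd using sp Zp by (simp add: ln_mult ln_div)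
    then show ?thesis using lsig lZ by simp
  qed simp
  have f5: "J * B * ln y = J * B * ((ln B - ln K - ln N) / 2 + ln \<zeta> / 2)"
  proof -
    have "ln y = ln \<sigma> + ln Z" unfolding yd using sp Zp by (simp add: ln_mult)
    then show ?thesis using lsig lZ by simp
  qed
  have eq: "(J - 1) * (p * B * ln (p * B) - p * B) + (J - 1) * (B * ln B - B) + (p * B + B) * ln N
     - J * (p * B + B) * (ln N - 2 * ((p * B + B) / N)) + J * B * (p + \<zeta> / 2) * E - J * (p * B) * ln x - J * B * ln y
     = B * ((p + 1) * (((J - 2) / 2) * (ln B - ln N) + (J / 2) * ln K)
          - p * ln p - (J - 1) * (p + 1) + (J / 2) * (p - 1) * ln \<zeta>
          + J * (p + \<zeta> / 2) * E + 2 * J * (p + 1)^2 * B / N)"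
    unfolding f1 f4 f5 using N by (simp add: field_simps power2_eq_square)
  show ?thesis
    unfolding Psi_def Eeq[symmetric] using eq mM lnab2 by (simp add: algebra_simps) 
qed


lemma reg2_Psi:
  fixes J K N B p x y :: real
  assumes J: "3 \<le> J" and K: "2 \<le> K" and N: "0 < N" and B: "0 < B" and p: "1 \<le> p"
    and pK: "p \<le> K - 1" and small: "K * B / N \<le> 1/2"
    and xd: "x = p / (K - 1)" and yd: "y = exp (- p) * B / N"
  shows "Psi J K N (p * B) B x y \<le> B * (((J - 1) * p - 1) * (ln B - ln N) - p * ln p + p + J + 1
            + J * p * ln (K - 1) + 2 * J * (p + 1)^2 * B / N)"
proof -
  have x0: "0 < x" using xd p K by simp
  have y0: "0 < y" using yd B N by simp
  have Kx: "(K - 1) * x = p" using xd K by simp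
  have KB1: "K * B / N \<le> 1" using small by linarith
  have Ky: "K * y \<le> 1"
  proof -
    have "K * y = exp (- p) * (K * B / N)" unfolding yd by simp
    also have "\<dots> \<le> 1 * 1" using KB1 K B N p by (intro mult_mono) auto
    finally show ?thesis by simp
  qed
  have Mb: "Mbr K x y \<le> K * y * exp p + K^2 / 2 * y^2 * exp (p + 1)"
  proof -
    have a: "K * y * (exp ((K - 1) * x) - 1) \<le> K * y * exp p" unfolding Kx using K y0 by simp
    have "(K - 2) * (x + y) \<le> (K - 1) * x + K * y" using K x0 y0 by (simp add: algebra_simps)
    also have "\<dots> \<le> p + 1" using Kx Ky by simp
    finally have "exp ((K - 2) * (x + y)) \<le> exp (p + 1)" by simp
    moreover have "K * (K - 1) / 2 \<le> K^2 / 2" using K by (simp add: power2_eq_square algebra_simps)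
    ultimately have b: "(K * (K - 1) / 2) * y^2 * exp ((K - 2) * (x + y)) \<le> K^2 / 2 * y^2 * exp (p + 1)"
      using K by (intro mult_mono) (auto simp: zero_le_mult_iff)
    show ?thesis unfolding Mbr_def using a b by linarith
  qed
  have mM: "(N * J / K) * Mbr K x y \<le> 2 * J * B"
  proof -
    have "(N * J / K) * Mbr K x y \<le> (N * J / K) * (K * y * exp p + K^2 / 2 * y^2 * exp (p + 1))"
      using Mb N J K by (intro mult_left_mono) auto
    also have "\<dots> = J * B + J * B * (K * B / N) * exp (1 - p) / 2"
    proof -
      have e1: "exp (- p) * exp p = 1" by (simp add: exp_minus field_simps)
      have e2: "exp (- p) * exp (- p) * exp (p + 1) = exp (1 - p)" by (simp add: exp_add[symmetric])
      show ?thesis unfolding yd using N K e1 e2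
        by (simp add: field_simps power2_eq_square)
    qed
    also have "\<dots> \<le> J * B + J * B * 1 * 1 / 2"
    proof -
      have "exp (1 - p) \<le> 1" using p by simp
      then have "J * B * (K * B / N) * exp (1 - p) \<le> J * B * 1 * 1"
        using J B KB1 K N by (intro mult_mono) auto
      then show ?thesis by (simp add: mult.commute)
    qed
    also have "\<dots> \<le> 2 * J * B" using J B by simp
    finally show ?thesis .
  qed
  have small2: "(p * B + B) / N \<le> 1/2"
  proof -
    have "(p + 1) * B \<le> K * B" using pK B by (intro mult_right_mono) auto
    then have "(p * B + B) \<le> K * B" by (simp add: algebra_simps)
    then have "(p * B + B) / N \<le> K * B / N" using N by (simp add: divide_right_mono)
    then show ?thesis using small by linarith
  qed
  have lnab: "ln N - 2 * ((p * B + B) / N) \<le> ln (N - p * B - B)"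
    by (rule ln_NAB[OF N]) (use p B small2 in auto)
  have lnab2: "J * (p * B + B) * (ln N - 2 * ((p * B + B) / N)) \<le> J * (p * B + B) * ln (N - p * B - B)"
    using lnab J p B by (intro mult_left_mono) auto
  have f1: "p * B * ln (p * B) = p * B * (ln p + ln B)" using p B by (simp add: ln_mult)
  have f4: "J * (p * B) * ln x = J * p * B * (ln p - ln (K - 1))"
    unfolding xd using p K by (simp add: ln_div)
  have f5: "J * B * ln y = J * B * (- p + ln B - ln N)"
    unfolding yd using B N by (simp add: ln_div ln_mult)
  have eq: "(J - 1) * (p * B * ln (p * B) - p * B) + (J - 1) * (B * ln B - B) + (p * B + B) * ln N
     - J * (p * B + B) * (ln N - 2 * ((p * B + B) / N)) + 2 * J * B - J * (p * B) * ln x - J * B * ln y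
     = B * (((J - 1) * p - 1) * (ln B - ln N) - p * ln p + p + J + 1
            + J * p * ln (K - 1) + 2 * J * (p + 1)^2 * B / N)"
    unfolding f1 f4 f5 using N by (simp add: field_simps power2_eq_square)
  show ?thesis
    unfolding Psi_def using eq mM lnab2 by (simp add: algebra_simps)
qed


lemma Phi2_bound:
  fixes J K N B p Lb D :: real
  assumes J: "3 \<le> J" and K: "2 \<le> K" and p: "J + 2 \<le> p" and lK: "2 * (J + 2) \<le> ln K"
    and Lb: "Lb \<le> 1" and D0: "D \<le> 0" and Dd: "D = ln B - ln N + (J / (J - 2)) * ln K - Lb"
    and er: "2 * J * (p + 1)^2 * B / N \<le> p"
  shows "((J - 1) * p - 1) * (ln B - ln N) - p * ln p + p + J + 1
            + J * p * ln (K - 1) + 2 * J * (p + 1)^2 * B / N \<le> D - 1"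
proof -
  define r where "r = J / (J - 2)"
  have r1: "1 \<le> r" unfolding r_def using J by simp
  have lBN: "ln B - ln N = D + Lb - r * ln K" using Dd unfolding r_def by simp
  have lK0: "0 \<le> ln K" using K by simp
  have a1: "J * p * ln (K - 1) \<le> J * p * ln K"
    using J p K by (intro mult_left_mono) auto
  have a2: "((J - 1) * p - 1) * (- r * ln K) + J * p * ln K = r * (1 - p) * ln K"
    unfolding r_def using J by (simp add: field_simps)
  have a3: "r * (1 - p) * ln K \<le> - (p / 2) * ln K"
  proof -
    have "r * (1 - p) \<le> 1 * (1 - p)" using r1 p J by (intro mult_right_mono_neg) auto
    also have "\<dots> \<le> - (p / 2)" using p J by simp
    finally show ?thesis using lK0 by (intro mult_right_mono) auto
  qed
  have c1: "1 \<le> (J - 1) * p - 1"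
  proof -
    have "2 * 5 \<le> (J - 1) * p" using J p by (intro mult_mono) auto
    then show ?thesis by simp
  qed
  have a4: "((J - 1) * p - 1) * D \<le> D"
  proof -
    have "((J - 1) * p - 1) * D \<le> 1 * D" using c1 D0 by (intro mult_right_mono_neg) auto
    then show ?thesis by simp
  qed
  have a5: "((J - 1) * p - 1) * Lb \<le> (J - 1) * p"
  proof -
    have "((J - 1) * p - 1) * Lb \<le> ((J - 1) * p - 1) * 1" using c1 Lb by (intro mult_left_mono) auto
    then show ?thesis by simp
  qed
  have a6: "0 \<le> p * ln p" using p J by simp
  have a7: "(p / 2) * ln K \<ge> (p / 2) * (2 * (J + 2))" using lK p J by (intro mult_left_mono) auto
  have expand: "((J - 1) * p - 1) * (ln B - ln N) = ((J - 1) * p - 1) * D + ((J - 1) * p - 1) * Lb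
      + ((J - 1) * p - 1) * (- r * ln K)"
    unfolding lBN by (simp add: algebra_simps)
  have a8: "(p / 2) * (2 * (J + 2)) = p * J + 2 * p" by (simp add: algebra_simps)
  have a9: "(J - 1) * p = p * J - p" by (simp add: algebra_simps)
  have a10: "- (p / 2) * ln K = - ((p / 2) * ln K)" by simp
  show ?thesis using expand a1 a2 a3 a4 a5 a6 a7 a8 a9 a10 er p J by linarith
qed


lemma E_Psi:
  assumes ab: "a + b < n" and j: "1 \<le> j" and k: "2 \<le> k" and kn: "k dvd n"
    and x: "0 \<le> x" and y: "0 < y" and ax: "a = 0 \<or> 0 < x"
  shows "E_val n j k a b \<le> exp (2 + ln (real (j*a) + 1) + ln (real (j*b) + 1)
            + Psi (real j) (real k) (real n) (real a) (real b) x y)"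
proof -
  have S: "S_coeff n j k a b \<le> exp (real (n * j div k) * Mb k x y - real (j*a) * ln x - real (j*b) * ln y)"
    by (rule S_bound[OF k x y ax])
  have R: "trinom n a b / trinom (n*j) (j*a) (j*b) \<le> exp (Rr n j a b)" by (rule ratio_bound[OF ab j])
  have t2: "0 < trinom (n*j) (j*a) (j*b)" unfolding trinom_def by simp
  have t1: "0 < trinom n a b" unfolding trinom_def by simp
  have "E_val n j k a b = (trinom n a b / trinom (n*j) (j*a) (j*b)) * S_coeff n j k a b"
    unfolding E_val_def by simp
  also have "\<dots> \<le> exp (Rr n j a b) * exp (real (n * j div k) * Mb k x y - real (j*a) * ln x - real (j*b) * ln y)"
    by (rule mult_mono[OF R S]) (use t1 t2 in \<open>auto intro: S_nonneg\<close>)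
  also have "\<dots> = exp (Rr n j a b + real (n * j div k) * Mb k x y - real (j*a) * ln x - real (j*b) * ln y)"
    by (simp add: exp_add[symmetric] algebra_simps)
  also have "Rr n j a b + real (n * j div k) * Mb k x y - real (j*a) * ln x - real (j*b) * ln y
      = 2 + ln (real (j*a) + 1) + ln (real (j*b) + 1) + Psi (real j) (real k) (real n) (real a) (real b) x y"
  proof -
    have m: "real (n * j div k) = real n * real j / real k"
    proof -
      obtain q where q: "n = k * q" using kn by auto
      have "n * j div k = q * j" using q k by simp
      then show ?thesis using q k by simp
    qed
    have mb: "Mb k x y = Mbr (real k) x y" unfolding Mb_def Mbr_def using k by (simp add: of_nat_diff)
    show ?thesis unfolding Rr_def Psi_def m mb by (simp add: algebra_simps)
  qed
  finally show ?thesis .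
qed


definition ell :: "real \<Rightarrow> real" where "ell \<theta> = - ln \<theta> / 2"
definition P0 :: "nat \<Rightarrow> real" where "P0 j = real j + 2"
definition eta :: "nat \<Rightarrow> real \<Rightarrow> real" where
  "eta j \<theta> = min (exp (-1)) ((real j - 2) * ell \<theta> / (4 * real j))"
definition C1 :: "nat \<Rightarrow> real \<Rightarrow> real" where "C1 j \<theta> = P0 j / sqrt (eta j \<theta>) + 1"
definition tau0 :: "nat \<Rightarrow> real \<Rightarrow> real" where
  "tau0 j \<theta> = min (1 / (4 * real j)) (min (1 / C1 j \<theta>)
      (((real j - 2) * ell \<theta> / 8) / (3 * real j * (P0 j + 1) * C1 j \<theta> + 2 * real j * (P0 j + 1)^2)))"

definition Kcond :: "nat \<Rightarrow> real \<Rightarrow> nat \<Rightarrow> bool" where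
  "Kcond j \<theta> k \<longleftrightarrow> P0 j + 1 \<le> real k \<and> 2 * (real j + 2) \<le> ln (real k)
     \<and> (real j / (real j - 2)) * (ln (real k) - ln (real k - 1)) \<le> ell \<theta>
     \<and> real k * (\<theta> * beta_bar j * (real k - 1) powr (- real j / (real j - 2))) \<le> (tau0 j \<theta>)^2"

lemma consts_pos:
  assumes j: "3 \<le> j" and th: "0 < \<theta>" "\<theta> < 1"
  shows "0 < ell \<theta>" "0 < eta j \<theta>" "eta j \<theta> \<le> exp (-1)" "real j * eta j \<theta> / 2 \<le> (real j - 2) * ell \<theta> / 8"
    "1 \<le> C1 j \<theta>" "0 < tau0 j \<theta>" "tau0 j \<theta> \<le> 1 / (4 * real j)" "tau0 j \<theta> * C1 j \<theta> \<le> 1"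
    "(3 * real j * (P0 j + 1) * C1 j \<theta> + 2 * real j * (P0 j + 1)^2) * tau0 j \<theta> \<le> (real j - 2) * ell \<theta> / 8"
proof -
  show l: "0 < ell \<theta>" unfolding ell_def using th by simp
  have j3: "3 \<le> real j" using j by simp
  show e: "0 < eta j \<theta>" unfolding eta_def using l j3 by simp
  show "eta j \<theta> \<le> exp (-1)" unfolding eta_def by simp
  have "eta j \<theta> \<le> (real j - 2) * ell \<theta> / (4 * real j)" unfolding eta_def by simp
  then have "real j * eta j \<theta> \<le> real j * ((real j - 2) * ell \<theta> / (4 * real j))" using j3 by (intro mult_left_mono) auto
  moreover have "real j * ((real j - 2) * ell \<theta> / (4 * real j)) = (real j - 2) * ell \<theta> / 4"
    using j3 by (simp add: field_simps)
  ultimately show "real j * eta j \<theta> / 2 \<le> (real j - 2) * ell \<theta> / 8" by linarith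
  have P: "0 < P0 j" unfolding P0_def by simp
  show C: "1 \<le> C1 j \<theta>" unfolding C1_def using P e by simp
  have den: "0 < 3 * real j * (P0 j + 1) * C1 j \<theta> + 2 * real j * (P0 j + 1)^2" using P C j3 by (intro add_pos_pos) auto
  show "0 < tau0 j \<theta>" unfolding tau0_def using j3 C den l by (auto intro!: divide_pos_pos)
  show "tau0 j \<theta> \<le> 1 / (4 * real j)" unfolding tau0_def by simp
  have "tau0 j \<theta> \<le> 1 / C1 j \<theta>" unfolding tau0_def by simp
  then show "tau0 j \<theta> * C1 j \<theta> \<le> 1" using C by (simp add: field_simps)
  have "tau0 j \<theta> \<le> ((real j - 2) * ell \<theta> / 8) / (3 * real j * (P0 j + 1) * C1 j \<theta> + 2 * real j * (P0 j + 1)^2)"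
    unfolding tau0_def by simp
  then show "(3 * real j * (P0 j + 1) * C1 j \<theta> + 2 * real j * (P0 j + 1)^2) * tau0 j \<theta> \<le> (real j - 2) * ell \<theta> / 8"
    using den by (simp add: field_simps)
qed


lemma exp_sub1_le3: "0 \<le> t \<Longrightarrow> t \<le> 1 \<Longrightarrow> exp t - 1 \<le> 3 * (t::real)"
proof -
  assume t: "0 \<le> t" "t \<le> 1"
  have "exp t - 1 \<le> t * exp t" by (rule exp_minus_one_le[OF t(1)])
  also have "\<dots> \<le> t * 3"
  proof -
    have "exp t \<le> exp 1" using t by simp
    also have "\<dots> \<le> 3" by (rule exp_le)
    finally show ?thesis using t by (intro mult_left_mono) auto
  qed
  finally show ?thesis by simp
qed

lemma main_est:
  fixes j k n a b :: nat
  assumes j: "3 \<le> j" and th: "0 < \<theta>" "\<theta> < 1" and Kc: "Kcond j \<theta> k" and kn: "k dvd n"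
    and b: "1 \<le> b" and bb: "real b \<le> \<theta> * beta_bar j * (real k - 1) powr (- real j / (real j - 2)) * real n"
    and ak: "a \<le> (k - 1) * b"
  shows "E_val n j k a b \<le> exp (2 + ln (real (j*a) + 1) + ln (real (j*b) + 1)
            + real b * (ln (real b) - ln (real n) + (real j / (real j - 2)) * ln (real k) - ln (beta_bar j)) / 4)"
    and "ln (real b) - ln (real n) + (real j / (real j - 2)) * ln (real k) - ln (beta_bar j) \<le> - ell \<theta>"
proof -
  define J K N A B where "J = real j" and "K = real k" and "N = real n" and "A = real a" and "B = real b"
  define Lb where "Lb = ln (beta_bar j)"
  define rr where "rr = J / (J - 2)"
  define D where "D = ln B - ln N + rr * ln K - Lb"
  define W where "W = (K - 1) powr (- J / (J - 2))"
  note cp = consts_pos[OF j th]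
  have J3: "3 \<le> J" unfolding J_def using j by simp
  have bp: "0 < beta_bar j" "Lb \<le> 1" "\<And>c. 0 \<le> c \<Longrightarrow> c < 1 \<Longrightarrow> Fj j c Lb \<le> 0"
    using beta_props[OF j] unfolding Lb_def by auto
  have KP: "P0 j + 1 \<le> K" and lK: "2 * (J + 2) \<le> ln K"
    and KL: "rr * (ln K - ln (K - 1)) \<le> ell \<theta>" and KW: "K * (\<theta> * beta_bar j * W) \<le> (tau0 j \<theta>)^2"
    using Kc unfolding Kcond_def K_def J_def rr_def W_def by auto
  have P0J: "P0 j = J + 2" unfolding P0_def J_def by simp
  have K6: "6 \<le> K" using KP J3 P0J by simp
  have K2: "2 \<le> K" using K6 by simp
  have Wp: "0 < W" unfolding W_def using K6 by simp
  have B1: "1 \<le> B" unfolding B_def using b by simp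
  have bb': "B \<le> \<theta> * beta_bar j * W * N" using bb unfolding B_def W_def J_def K_def N_def .
  have Np: "0 < N"
  proof (rule ccontr)
    assume "\<not> 0 < N" then have "N = 0" unfolding N_def by simp
    then show False using bb' B1 by simp
  qed
  have n0: "0 < n" using Np unfolding N_def by simp
  have KBN: "K * B / N \<le> (tau0 j \<theta>)^2"
  proof -
    have "K * B \<le> K * (\<theta> * beta_bar j * W * N)" using bb' K6 by (intro mult_left_mono) auto
    then have "K * B / N \<le> K * (\<theta> * beta_bar j * W)" using Np by (simp add: field_simps)
    then show ?thesis using KW by linarith
  qed
  have "1 / (4 * real j) \<le> 1 / 12" using j by (simp add: field_simps)
  then have t0: "0 < tau0 j \<theta>" "tau0 j \<theta> \<le> 1 / 12" using cp(6,7) by auto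
  have t0sq: "(tau0 j \<theta>)^2 \<le> tau0 j \<theta>" using t0 by (simp add: power2_eq_square mult_le_cancel_right1)
  have KBN2: "K * B / N \<le> 1/2" using KBN t0sq t0 by linarith
  have Dl: "D \<le> - ell \<theta>"
  proof -
    have "ln B \<le> ln (\<theta> * beta_bar j * W * N)" using bb' B1 by (subst ln_le_cancel_iff) auto
    also have "\<dots> = ln \<theta> + Lb + ln W + ln N" unfolding Lb_def using th bp(1) Wp Np by (simp add: ln_mult)
    also have "ln W = - rr * ln (K - 1)" unfolding W_def rr_def using K6 by (simp add: ln_powr)
    finally have "ln B \<le> ln \<theta> + Lb - rr * ln (K - 1) + ln N" by simp
    then have "D \<le> ln \<theta> + rr * (ln K - ln (K - 1))" unfolding D_def by (simp add: algebra_simps)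
    then show ?thesis using KL unfolding ell_def by simp
  qed
  then show "ln (real b) - ln (real n) + (real j / (real j - 2)) * ln (real k) - ln (beta_bar j) \<le> - ell \<theta>"
    unfolding D_def B_def N_def rr_def J_def K_def Lb_def .
  have D0: "D \<le> 0" using Dl cp(1) by simp
  define \<tau> where "\<tau> = sqrt (K * B / N)"
  have tau: "0 \<le> \<tau>" "\<tau> \<le> tau0 j \<theta>"
  proof -
    show "0 \<le> \<tau>" unfolding \<tau>_def using K6 B1 Np by simp
    have "\<tau> \<le> sqrt ((tau0 j \<theta>)^2)" unfolding \<tau>_def using KBN by (rule real_sqrt_le_mono)
    then show "\<tau> \<le> tau0 j \<theta>" using t0 by simp
  qed
  have tau2: "\<tau>^2 = K * B / N" unfolding \<tau>_def using K6 B1 Np by simp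
  have BN: "B / N \<le> \<tau>^2" unfolding tau2 using B1 Np K6 by (simp add: field_simps)
  have ABK: "A + B \<le> K * B"
  proof -
    have "real a \<le> real ((k - 1) * b)" using ak by (simp only: of_nat_le_iff)
    then have "A \<le> (K - 1) * B" unfolding A_def K_def B_def using K6 K_def by (simp add: of_nat_diff)
    then show ?thesis by (simp add: algebra_simps)
  qed
  have abn: "a + b < n"
  proof -
    have "K * B \<le> N / 2" using KBN2 Np by (simp add: field_simps)
    then have "A + B < N" using ABK Np by simp
    then show ?thesis unfolding A_def B_def N_def by simp
  qed
  define p where "p = A / B"
  have pA: "p * B = A" unfolding p_def using B1 by simp
  have p0: "0 \<le> p" unfolding p_def A_def using B1 by simp
  have pK: "p \<le> K - 1"
  proof -
    have "(K - 1) * B = K * B - B" by (simp add: algebra_simps)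
    then have "A \<le> (K - 1) * B" using ABK by linarith
    then show ?thesis unfolding p_def using B1 by (simp add: divide_le_eq)
  qed
  have j1: "1 \<le> j" using j by simp
  have Dd: "D = ln B - ln N + (J / (J - 2)) * ln K - Lb" unfolding D_def rr_def ..
  have goal_form: "E_val n j k a b \<le> exp (2 + ln (real (j*a) + 1) + ln (real (j*b) + 1) + B * D / 4)"
  proof (cases "p \<le> P0 j")
    case True
    define \<eta> where "\<eta> = eta j \<theta>"
    define \<zeta> where "\<zeta> = max (1 - p) \<eta>"
    define Z where "Z = sqrt \<zeta>"
    define S where "S = p / Z"
    define \<sigma> where "\<sigma> = sqrt (B / (K * N))"
    define x where "x = \<sigma> * S"
    define y where "y = \<sigma> * Z"
    have eta: "0 < \<eta>" "\<eta> \<le> exp (-1)" using cp unfolding \<eta>_def by auto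
    have eta1: "\<eta> \<le> 1" using eta(2) by (meson exp_le_one_iff neg_le_0_iff_le order.trans zero_le_one)
    have lneta: "ln \<eta> \<le> -1" using eta by (metis ln_exp ln_le_cancel_iff exp_gt_zero)
    have zp: "0 < \<zeta>" "\<zeta> \<le> 1" "\<eta> \<le> \<zeta>" unfolding \<zeta>_def using eta eta1 p0 by auto
    have Zp: "0 < Z" "Z \<le> 1" "sqrt \<eta> \<le> Z" unfolding Z_def using zp by auto
    have sp: "0 < \<sigma>" unfolding \<sigma>_def using B1 K6 Np by simp
    have small: "(p + 1) * B / N \<le> 1/2"
    proof -
      have "(p + 1) * B \<le> K * B" using True KP B1 by (intro mult_right_mono) auto
      then have "(p + 1) * B / N \<le> K * B / N" using Np by (simp add: divide_right_mono)
      then show ?thesis using KBN2 by linarith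
    qed
    have R1: "Psi J K N (p * B) B x y \<le> B * ((p + 1) * (((J - 2) / 2) * (ln B - ln N) + (J / 2) * ln K)
          - p * ln p - (J - 1) * (p + 1) + (J / 2) * (p - 1) * ln \<zeta>
          + J * (p + \<zeta> / 2) * exp (\<tau> * (S + Z)) + 2 * J * (p + 1)^2 * B / N)"
      by (rule reg1_Psi[OF J3 K2 Np _ p0 eta(1) \<zeta>_def Z_def S_def \<sigma>_def x_def y_def \<tau>_def small])
         (use B1 in simp)
    have M1: "(p + 1) * ((J - 2) / 2) * (D + Lb) - p * ln p - (J - 1) * (p + 1) + (J / 2) * (p - 1) * ln \<zeta>
          + J * (p + \<zeta> / 2) \<le> ((J - 2) / 2) * D + J * \<eta> / 2"
      by (rule M1_bound[OF J_def j p0 eta(1) lneta bp(2) bp(3) D0 \<zeta>_def])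
    have idK: "(p + 1) * (((J - 2) / 2) * (ln B - ln N) + (J / 2) * ln K) = (p + 1) * ((J - 2) / 2) * (D + Lb)"
    proof -
      have h: "((J - 2) / 2) * (J / (J - 2)) = J / 2" using J3 by (simp add: field_simps)
      have h2: "((J - 2) / 2) * ((J / (J - 2)) * ln K) = (J / 2) * ln K"
        by (simp only: mult.assoc[symmetric] h)
      have e1: "D + Lb = (ln B - ln N) + (J / (J - 2)) * ln K" using Dd by simp
      have "(p + 1) * ((J - 2) / 2) * (D + Lb) = (p + 1) * (((J - 2) / 2) * (D + Lb))"
        by (simp only: mult.assoc)
      also have "\<dots> = (p + 1) * (((J - 2) / 2) * (ln B - ln N) + (J / 2) * ln K)"
        unfolding e1 distrib_left h2 ..
      finally show ?thesis by (rule sym)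
    qed
    have SZC: "S + Z \<le> C1 j \<theta>"
    proof -
      have "S \<le> P0 j / sqrt \<eta>"
      proof -
        have "S \<le> P0 j / Z" unfolding S_def using True Zp by (simp add: divide_right_mono)
        also have "\<dots> \<le> P0 j / sqrt \<eta>" using Zp eta P0J J3 by (intro divide_left_mono) auto
        finally show ?thesis .
      qed
      then show ?thesis unfolding C1_def \<eta>_def using Zp by simp
    qed
    have S0: "0 \<le> S" unfolding S_def using p0 Zp by simp
    have tSZ: "0 \<le> \<tau> * (S + Z)" "\<tau> * (S + Z) \<le> \<tau> * C1 j \<theta>"
      using tau S0 Zp SZC by (auto intro: mult_left_mono)
    have tC: "\<tau> * C1 j \<theta> \<le> 1"
    proof -
      have "\<tau> * C1 j \<theta> \<le> tau0 j \<theta> * C1 j \<theta>" using tau cp(5) by (intro mult_right_mono) auto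
      then show ?thesis using cp(8) by linarith
    qed
    have err1: "J * (p + \<zeta> / 2) * (exp (\<tau> * (S + Z)) - 1) \<le> 3 * J * (P0 j + 1) * C1 j \<theta> * \<tau>"
    proof -
      have "exp (\<tau> * (S + Z)) - 1 \<le> 3 * (\<tau> * (S + Z))" by (rule exp_sub1_le3) (use tSZ tC in auto)
      also have "\<dots> \<le> 3 * (\<tau> * C1 j \<theta>)" using tSZ by simp
      finally have e: "exp (\<tau> * (S + Z)) - 1 \<le> 3 * (\<tau> * C1 j \<theta>)" .
      have pz: "p + \<zeta> / 2 \<le> P0 j + 1" using True zp by simp
      have "J * (p + \<zeta> / 2) * (exp (\<tau> * (S + Z)) - 1) \<le> J * (P0 j + 1) * (3 * (\<tau> * C1 j \<theta>))"
        using pz e J3 p0 zp tSZ by (intro mult_mono) auto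
      then show ?thesis by (simp add: algebra_simps)
    qed
    have err2: "2 * J * (p + 1)^2 * B / N \<le> 2 * J * (P0 j + 1)^2 * \<tau>"
    proof -
      have "(p + 1)^2 \<le> (P0 j + 1)^2" using True p0 by (intro power_mono) auto
      moreover have "B / N \<le> \<tau>" 
      proof -
        have "\<tau> * \<tau> \<le> 1 * \<tau>" using tau t0 by (intro mult_right_mono) auto
        then show ?thesis using BN by (simp add: power2_eq_square)
      qed
      ultimately have "(p + 1)^2 * (B / N) \<le> (P0 j + 1)^2 * \<tau>" using B1 Np by (intro mult_mono) auto
      then have "2 * J * ((p + 1)^2 * (B / N)) \<le> 2 * J * ((P0 j + 1)^2 * \<tau>)"
        using J3 by (intro mult_left_mono) auto
      moreover have "2 * J * (p + 1)^2 * B / N = 2 * J * ((p + 1)^2 * (B / N))" by simp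
      moreover have "2 * J * (P0 j + 1)^2 * \<tau> = 2 * J * ((P0 j + 1)^2 * \<tau>)" by simp
      ultimately show ?thesis by simp
    qed
    have errsum: "(3 * J * (P0 j + 1) * C1 j \<theta> + 2 * J * (P0 j + 1)^2) * \<tau> \<le> (J - 2) * ell \<theta> / 8"
    proof -
      have "(3 * J * (P0 j + 1) * C1 j \<theta> + 2 * J * (P0 j + 1)^2) * \<tau>
          \<le> (3 * J * (P0 j + 1) * C1 j \<theta> + 2 * J * (P0 j + 1)^2) * tau0 j \<theta>"
        using tau J3 cp(5) P0J by (intro mult_left_mono) auto
      then show ?thesis using cp(9) unfolding J_def by linarith
    qed
    have eta2: "J * \<eta> / 2 \<le> (J - 2) * ell \<theta> / 8" using cp(4) unfolding \<eta>_def J_def .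
    have Phi: "(p + 1) * (((J - 2) / 2) * (ln B - ln N) + (J / 2) * ln K)
          - p * ln p - (J - 1) * (p + 1) + (J / 2) * (p - 1) * ln \<zeta>
          + J * (p + \<zeta> / 2) * exp (\<tau> * (S + Z)) + 2 * J * (p + 1)^2 * B / N \<le> D / 4"
    proof -
      have e: "J * (p + \<zeta> / 2) * exp (\<tau> * (S + Z)) = J * (p + \<zeta> / 2) + J * (p + \<zeta> / 2) * (exp (\<tau> * (S + Z)) - 1)"
        by (simp add: algebra_simps)
      have q: "((J - 2) / 2) * D + (J - 2) * ell \<theta> / 4 \<le> D / 4"
      proof -
        have "(J - 2) * ell \<theta> \<le> (J - 2) * (- D)" using Dl J3 by (intro mult_left_mono) auto
        moreover have "(J - 3) * D \<le> 0" using J3 D0 by (simp add: mult_nonneg_nonpos)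
        ultimately show ?thesis by (simp add: field_simps)
      qed
      have t: "(3 * J * (P0 j + 1) * C1 j \<theta> + 2 * J * (P0 j + 1)^2) * \<tau>
           = 3 * J * (P0 j + 1) * C1 j \<theta> * \<tau> + 2 * J * (P0 j + 1)^2 * \<tau>" by (simp add: algebra_simps)
      show ?thesis using idK M1 e err1 err2 errsum eta2 q t by linarith
    qed
    have x0: "0 \<le> x" unfolding x_def using sp S0 by simp
    have y0: "0 < y" unfolding y_def using sp Zp by simp
    have ax: "a = 0 \<or> 0 < x"
    proof (cases "a = 0")
      case False
      then have "0 < p" unfolding p_def A_def using B1 by simp
      then show ?thesis unfolding x_def S_def using sp Zp by simp
    qed simp
    have "E_val n j k a b \<le> exp (2 + ln (real (j*a) + 1) + ln (real (j*b) + 1) + Psi J K N A B x y)"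
      unfolding J_def K_def N_def A_def B_def by (rule E_Psi[OF abn j1 _ kn x0 y0 ax]) (use K2 K_def in simp)
    also have "\<dots> \<le> exp (2 + ln (real (j*a) + 1) + ln (real (j*b) + 1) + B * D / 4)"
    proof -
      have "Psi J K N A B x y \<le> B * (D / 4)" using R1 Phi B1 unfolding pA
        by (smt (verit) mult_left_mono)
      then show ?thesis by simp
    qed
    finally show ?thesis .
  next
    case False
    then have pP: "J + 2 \<le> p" using P0J by simp
    define x where "x = p / (K - 1)"
    define y where "y = exp (- p) * B / N"
    have p1: "1 \<le> p" using pP J3 by simp
    have R2: "Psi J K N (p * B) B x y \<le> B * (((J - 1) * p - 1) * (ln B - ln N) - p * ln p + p + J + 1
            + J * p * ln (K - 1) + 2 * J * (p + 1)^2 * B / N)"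
      by (rule reg2_Psi[OF J3 K2 Np _ p1 pK KBN2 x_def y_def]) (use B1 in simp)
    have er: "2 * J * (p + 1)^2 * B / N \<le> p"
    proof -
      have "(p + 1)^2 \<le> (2 * p) * K" unfolding power2_eq_square
        using p1 pK by (intro mult_mono) auto
      then have "2 * J * (p + 1)^2 * B / N \<le> 2 * J * ((2 * p) * K) * B / N"
        using J3 B1 Np by (intro divide_right_mono mult_right_mono mult_left_mono) auto
      also have "\<dots> = 4 * J * p * (K * B / N)" by (simp add: field_simps)
      also have "\<dots> \<le> 4 * J * p * (1 / (4 * J))"
      proof -
        have "K * B / N \<le> 1 / (4 * J)" using KBN t0sq cp(7) unfolding J_def by linarith
        then show ?thesis using J3 p1 by (intro mult_left_mono) auto
      qed
      also have "\<dots> = p" using J3 by simp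
      finally show ?thesis .
    qed
    have P2: "((J - 1) * p - 1) * (ln B - ln N) - p * ln p + p + J + 1
            + J * p * ln (K - 1) + 2 * J * (p + 1)^2 * B / N \<le> D - 1"
      by (rule Phi2_bound[OF J3 K2 pP lK bp(2) D0 Dd er])
    have x0: "0 < x" unfolding x_def using p1 K6 by simp
    have y0: "0 < y" unfolding y_def using B1 Np by simp
    have "E_val n j k a b \<le> exp (2 + ln (real (j*a) + 1) + ln (real (j*b) + 1) + Psi J K N A B x y)"
      unfolding J_def K_def N_def A_def B_def by (rule E_Psi[OF abn j1 _ kn _ y0]) (use K2 K_def x0 in auto)
    also have "\<dots> \<le> exp (2 + ln (real (j*a) + 1) + ln (real (j*b) + 1) + B * D / 4)"
    proof -
      have "D - 1 \<le> D / 4" using D0 by simp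
      then have "Psi J K N A B x y \<le> B * (D / 4)" using R2 P2 B1 unfolding pA
        by (smt (verit) mult_left_mono)
      then show ?thesis by simp
    qed
    finally show ?thesis .
  qed
  then show "E_val n j k a b \<le> exp (2 + ln (real (j*a) + 1) + ln (real (j*b) + 1)
            + real b * (ln (real b) - ln (real n) + (real j / (real j - 2)) * ln (real k) - ln (beta_bar j)) / 4)"
    unfolding D_def B_def N_def rr_def J_def K_def Lb_def .
qed


lemma E_nonneg: "0 \<le> E_val n j k a b"
  unfolding E_val_def trinom_def by (intro divide_nonneg_pos mult_nonneg_nonneg S_nonneg) auto

lemma E_zero: "1 \<le> j \<Longrightarrow> (k - 1) * b < a \<Longrightarrow> E_val n j k a b = 0"
proof -
  assume j: "1 \<le> j" and a: "(k - 1) * b < a"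
  have "(k - 1) * (j * b) < j * a"
  proof -
    have "j * ((k - 1) * b) < j * a" using a j by simp
    then show ?thesis by (simp add: algebra_simps)
  qed
  then show ?thesis unfolding E_val_def by (simp add: S_zero)
qed

lemma pow4_exp: "0 < u \<Longrightarrow> 0 \<le> b \<Longrightarrow> b^4 * exp (- u * b) \<le> (8 / u)^4 * exp (- (u / 2) * (b::real))"
proof -
  assume u: "0 < u" and b: "0 \<le> b"
  have "u * b / 8 \<le> exp (u * b / 8)" using exp_ge_add_one_self[of "u*b/8"] by linarith
  then have "(u * b / 8)^4 \<le> exp (u * b / 8)^4" using u b by (intro power_mono) auto
  also have "\<dots> = exp (u * b / 2)" by (simp add: exp_of_nat_mult[symmetric])
  finally have h: "(u * b / 8)^4 \<le> exp (u * b / 2)" .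
  have "b^4 = (8 / u)^4 * (u * b / 8)^4" using u by (simp add: field_simps)
  also have "\<dots> \<le> (8 / u)^4 * exp (u * b / 2)" using h u by (intro mult_left_mono) auto
  finally have "b^4 * exp (- u * b) \<le> (8 / u)^4 * exp (u * b / 2) * exp (- u * b)"
    by (intro mult_right_mono) auto
  also have "\<dots> = (8 / u)^4 * exp (- (u / 2) * b)" by (simp add: mult.assoc exp_add[symmetric])
  finally show ?thesis .
qed

lemma geom_bound:
  assumes "0 < u" and that: "finite B"
  shows "(\<Sum>b\<in>B. exp (- (u / 2) * real b)) \<le> 1 / (1 - exp (- u / 2))"
proof -
  define q where "q = exp (- u / 2)"
  have q: "0 < q" "q < 1" unfolding q_def using assms by auto
  have e: "exp (- (u / 2) * real b) = q ^ b" for b unfolding q_def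
    by (simp add: exp_of_nat_mult[symmetric] mult.commute)
  have "(\<Sum>b\<in>B. q ^ b) \<le> (\<Sum>b. q ^ b)"
    by (rule sum_le_suminf) (use q that in \<open>auto intro: summable_geometric\<close>)
  also have "\<dots> = 1 / (1 - q)" using q by (simp add: suminf_geometric)
  finally show ?thesis unfolding e q_def .
qed


definition Ck :: "nat \<Rightarrow> nat \<Rightarrow> real" where
  "Ck j k = exp (((real j / (real j - 2)) * ln (real k) - ln (beta_bar j)) / 8)"

lemma inner_bound:
  fixes j k n b :: nat
  assumes j: "3 \<le> j" and th: "0 < \<theta>" "\<theta> < 1" and Kc: "Kcond j \<theta> k" and kn: "k dvd n"
    and b: "1 \<le> b" and bb: "real b \<le> \<theta> * beta_bar j * (real k - 1) powr (- real j / (real j - 2)) * real n"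
  shows "(\<Sum>a=0..n - b. E_val n j k a b) \<le> 2 * exp 2 * (real j)^2 * (real k)^2 * Ck j k * real b ^ 4
            * exp (- (ell \<theta> / 8) * real b) * exp (- ln (real n) / 8)"
proof -
  define T where "T = 2 * exp 2 * (real j)^2 * real k * Ck j k * real b ^ 3 * exp (- (ell \<theta> / 8) * real b) * exp (- ln (real n) / 8)"
  have kK: "P0 j + 1 \<le> real k" using Kc unfolding Kcond_def by simp
  have k2: "2 \<le> k" using kK unfolding P0_def by simp
  have j1: "1 \<le> j" using j by simp
  have cpl: "0 < ell \<theta>" using consts_pos[OF j th] by simp
  have T0: "0 \<le> T" unfolding T_def Ck_def by simp
  have per: "E_val n j k a b \<le> (if a \<le> (k - 1) * b then T else 0)" for a
  proof (cases "a \<le> (k - 1) * b")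
    case False
    then show ?thesis using E_zero[OF j1, of k b a n] by simp
  next
    case True
    define D where "D = ln (real b) - ln (real n) + (real j / (real j - 2)) * ln (real k) - ln (beta_bar j)"
    have E1: "E_val n j k a b \<le> exp (2 + ln (real (j*a) + 1) + ln (real (j*b) + 1) + real b * D / 4)"
      using main_est(1)[OF j th Kc kn b bb True] unfolding D_def .
    have Dl: "D \<le> - ell \<theta>" using main_est(2)[OF j th Kc kn b bb True] unfolding D_def .
    have B1: "1 \<le> real b" using b by simp
    have jb1: "1 \<le> real j * real b"
    proof -
      have "1 * 1 \<le> real j * real b" using j b by (intro mult_mono) auto
      then show ?thesis by simp
    qed
    have X: "real (j*a) + 1 \<le> real j * real k * real b"
    proof -
      have "real a \<le> (real k - 1) * real b"
      proof -
        have "real a \<le> real ((k - 1) * b)" using True by (simp only: of_nat_le_iff)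
        then show ?thesis using k2 by (simp add: of_nat_diff)
      qed
      then have "real j * real a \<le> real j * ((real k - 1) * real b)" by (intro mult_left_mono) auto
      moreover note jb1
      ultimately show ?thesis by (simp add: algebra_simps)
    qed
    have Y: "real (j*b) + 1 \<le> 2 * real j * real b"
    proof -
      show ?thesis using jb1 by (simp add: mult.commute)
    qed
    have eD: "exp (real b * D / 4) \<le> real b * Ck j k * exp (- (ell \<theta> / 8) * real b) * exp (- ln (real n) / 8)"
    proof -
      have D0: "D \<le> 0" using Dl cpl by simp
      have "real b * D / 8 \<le> D / 8"
      proof -
        have "real b * D \<le> 1 * D" using B1 D0 by (intro mult_right_mono_neg) auto
        then show ?thesis by simp
      qed
      moreover have "real b * D / 8 \<le> - (ell \<theta> / 8) * real b"
      proof -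
        have "real b * D \<le> real b * (- ell \<theta>)" using Dl B1 by (intro mult_left_mono) auto
        then show ?thesis by (simp add: mult.commute)
      qed
      ultimately have "real b * D / 4 \<le> D / 8 + (- (ell \<theta> / 8) * real b)" by linarith
      then have "exp (real b * D / 4) \<le> exp (D / 8) * exp (- (ell \<theta> / 8) * real b)"
        by (simp add: exp_add[symmetric])
      also have "exp (D / 8) = exp (ln (real b) / 8) * Ck j k * exp (- ln (real n) / 8)"
        unfolding D_def Ck_def by (simp add: exp_add[symmetric] exp_diff[symmetric] field_simps)
      also have "exp (ln (real b) / 8) \<le> real b"
      proof -
        have "ln (real b) / 8 \<le> ln (real b)" using B1 by simp
        then have "exp (ln (real b) / 8) \<le> exp (ln (real b))" by simp
        then show ?thesis using B1 by simp
      qed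
      then have "exp (ln (real b) / 8) * Ck j k * exp (- ln (real n) / 8) * exp (- (ell \<theta> / 8) * real b)
          \<le> real b * Ck j k * exp (- ln (real n) / 8) * exp (- (ell \<theta> / 8) * real b)"
        by (intro mult_right_mono) (auto simp: Ck_def)
      finally show ?thesis by (simp add: algebra_simps)
    qed
    have "exp (2 + ln (real (j*a) + 1) + ln (real (j*b) + 1) + real b * D / 4)
        = exp 2 * (real (j*a) + 1) * (real (j*b) + 1) * exp (real b * D / 4)"
    proof -
      have p1: "0 < real (j*a) + 1" "0 < real (j*b) + 1"
        using of_nat_0_le_iff[of "j*a"] of_nat_0_le_iff[of "j*b"] by linarith+
      show ?thesis unfolding exp_add using exp_ln[OF p1(1)] exp_ln[OF p1(2)] by simp
    qed
    also have "\<dots> \<le> exp 2 * (real j * real k * real b) * (2 * real j * real b)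
        * (real b * Ck j k * exp (- (ell \<theta> / 8) * real b) * exp (- ln (real n) / 8))"
      using X Y eD by (intro mult_mono) auto
    also have "\<dots> = T" unfolding T_def by (simp add: power2_eq_square power3_eq_cube algebra_simps)
    finally show ?thesis using E1 True by simp
  qed
  have "(\<Sum>a=0..n - b. E_val n j k a b) \<le> (\<Sum>a=0..n - b. (if a \<le> (k - 1) * b then T else 0))"
    by (rule sum_mono) (rule per)
  also have "\<dots> = (\<Sum>a\<in>{a\<in>{0..n - b}. a \<le> (k - 1) * b}. T)"
    by (rule sum.inter_filter[symmetric]) simp
  also have "\<dots> = real (card {a\<in>{0..n - b}. a \<le> (k - 1) * b}) * T" by simp
  also have "\<dots> \<le> real ((k - 1) * b + 1) * T"
  proof -
    have "{a\<in>{0..n - b}. a \<le> (k - 1) * b} \<subseteq> {0..(k - 1) * b}" by auto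
    then have "card {a\<in>{0..n - b}. a \<le> (k - 1) * b} \<le> card {0..(k - 1) * b}" by (intro card_mono) auto
    then have "card {a\<in>{0..n - b}. a \<le> (k - 1) * b} \<le> (k - 1) * b + 1" by simp
    then have "real (card {a\<in>{0..n - b}. a \<le> (k - 1) * b}) \<le> real ((k - 1) * b + 1)"
      by (simp only: of_nat_le_iff)
    then show ?thesis using T0 by (intro mult_right_mono) auto
  qed
  also have "\<dots> \<le> real k * real b * T"
  proof -
    have e: "(k - 1) * b + b = k * b" using k2 by (cases k) auto
    then have "(k - 1) * b + 1 \<le> k * b" using b by linarith
    then have "real ((k - 1) * b + 1) \<le> real k * real b" by (metis of_nat_le_iff of_nat_mult)
    then show ?thesis using T0 by (intro mult_right_mono) auto
  qed
  also have "\<dots> = 2 * exp 2 * (real j)^2 * (real k)^2 * Ck j k * real b ^ 4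
            * exp (- (ell \<theta> / 8) * real b) * exp (- ln (real n) / 8)"
    unfolding T_def by (simp add: power2_eq_square power3_eq_cube power4_eq_xxxx algebra_simps)
  finally show ?thesis .
qed


lemma floor_bound: "b \<in> {1..nat \<lfloor>v\<rfloor>} \<Longrightarrow> real b \<le> v"
proof -
  assume b: "b \<in> {1..nat \<lfloor>v\<rfloor>}"
  then have "int b \<le> \<lfloor>v\<rfloor>" by auto
  then have "real_of_int (int b) \<le> real_of_int \<lfloor>v\<rfloor>" by (simp only: of_int_le_iff)
  moreover have "real_of_int \<lfloor>v\<rfloor> \<le> v" by (rule of_int_floor_le)
  moreover have "real_of_int (int b) = real b" by simp
  ultimately show ?thesis by linarith
qed

definition Cf :: "nat \<Rightarrow> real \<Rightarrow> nat \<Rightarrow> real" where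
  "Cf j \<theta> k = 2 * exp 2 * (real j)^2 * (real k)^2 * Ck j k * (8 / (ell \<theta> / 8))^4
      / (1 - exp (- (ell \<theta> / 8) / 2))"

lemma sum_bound:
  assumes j: "3 \<le> j" and th: "0 < \<theta>" "\<theta> < 1" and Kc: "Kcond j \<theta> k" and kn: "k dvd n"
  shows "(\<Sum>b=1..nat \<lfloor>\<theta> * beta_bar j * (real k - 1) powr (- real j / (real j - 2)) * real n\<rfloor>.
              \<Sum>a=0..n - b. E_val n j k a b) \<le> Cf j \<theta> k * exp (- ln (real n) / 8)"
proof -
  define v where "v = \<theta> * beta_bar j * (real k - 1) powr (- real j / (real j - 2)) * real n"
  define u where "u = ell \<theta> / 8"
  define c0 where "c0 = 2 * exp 2 * (real j)^2 * (real k)^2 * Ck j k * exp (- ln (real n) / 8)"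
  have u: "0 < u" unfolding u_def using consts_pos[OF j th] by simp
  have c0: "0 \<le> c0" unfolding c0_def Ck_def by simp
  have "(\<Sum>b=1..nat \<lfloor>v\<rfloor>. \<Sum>a=0..n - b. E_val n j k a b) \<le> (\<Sum>b=1..nat \<lfloor>v\<rfloor>. c0 * (real b ^ 4 * exp (- u * real b)))"
  proof (rule sum_mono)
    fix b assume bi: "b \<in> {1..nat \<lfloor>v\<rfloor>}"
    have "(\<Sum>a=0..n - b. E_val n j k a b) \<le> 2 * exp 2 * (real j)^2 * (real k)^2 * Ck j k * real b ^ 4
            * exp (- (ell \<theta> / 8) * real b) * exp (- ln (real n) / 8)"
      by (rule inner_bound[OF j th Kc kn]) (use bi floor_bound[OF bi] v_def in auto)
    also have "\<dots> = c0 * (real b ^ 4 * exp (- u * real b))" unfolding c0_def u_def by (simp add: algebra_simps)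
    finally show "(\<Sum>a=0..n - b. E_val n j k a b) \<le> c0 * (real b ^ 4 * exp (- u * real b))" .
  qed
  also have "\<dots> = c0 * (\<Sum>b=1..nat \<lfloor>v\<rfloor>. real b ^ 4 * exp (- u * real b))" by (simp add: sum_distrib_left)
  also have "\<dots> \<le> c0 * (\<Sum>b=1..nat \<lfloor>v\<rfloor>. (8 / u)^4 * exp (- (u / 2) * real b))"
    by (intro mult_left_mono sum_mono pow4_exp u c0) auto
  also have "\<dots> = c0 * ((8 / u)^4 * (\<Sum>b=1..nat \<lfloor>v\<rfloor>. exp (- (u / 2) * real b)))" by (simp add: sum_distrib_left)
  also have "\<dots> \<le> c0 * ((8 / u)^4 * (1 / (1 - exp (- u / 2))))"
    by (intro mult_left_mono geom_bound u c0) auto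
  also have "\<dots> = Cf j \<theta> k * exp (- ln (real n) / 8)" unfolding Cf_def c0_def u_def by (simp add: field_simps)
  finally show ?thesis unfolding v_def .
qed

lemma sum_nonneg_E: "0 \<le> (\<Sum>b\<in>B. \<Sum>a\<in>A b. E_val n j k a b)"
  by (intro sum_nonneg E_nonneg)

lemma K_exists:
  assumes j: "3 \<le> j" and th: "0 < \<theta>" "\<theta> < 1"
  shows "\<exists>K. \<forall>k\<ge>K. Kcond j \<theta> k"
proof -
  have e1: "eventually (\<lambda>k. P0 j + 1 \<le> real k) sequentially"
  proof -
    have "filterlim (\<lambda>k::nat. real k) at_top sequentially" by real_asymp
    then show ?thesis by (simp add: filterlim_at_top)
  qed
  have e2: "eventually (\<lambda>k. 2 * (real j + 2) \<le> ln (real k)) sequentially"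
  proof -
    have "filterlim (\<lambda>k::nat. ln (real k)) at_top sequentially" by real_asymp
    then show ?thesis by (simp add: filterlim_at_top)
  qed
  have e3: "eventually (\<lambda>k. (real j / (real j - 2)) * (ln (real k) - ln (real k - 1)) \<le> ell \<theta>) sequentially"
  proof -
    have "((\<lambda>k::nat. (real j / (real j - 2)) * (ln (real k) - ln (real k - 1))) \<longlongrightarrow> 0) sequentially"
      by real_asymp
    moreover have "0 < ell \<theta>" using consts_pos[OF j th] by simp
    ultimately have "eventually (\<lambda>k. (real j / (real j - 2)) * (ln (real k) - ln (real k - 1)) < ell \<theta>) sequentially"
      by (rule order_tendstoD(2))
    then show ?thesis by (rule eventually_mono) simp
  qed
  have e4: "eventually (\<lambda>k. real k * (\<theta> * beta_bar j * (real k - 1) powr (- real j / (real j - 2))) \<le> (tau0 j \<theta>)^2) sequentially"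
  proof -
    have "- real j / (real j - 2) < -1" using j by (simp add: field_simps)
    then have "((\<lambda>k::nat. real k * (\<theta> * beta_bar j * (real k - 1) powr (- real j / (real j - 2)))) \<longlongrightarrow> 0) sequentially"
      by real_asymp
    moreover have "0 < (tau0 j \<theta>)^2" using consts_pos[OF j th] by simp
    ultimately have "eventually (\<lambda>k. real k * (\<theta> * beta_bar j * (real k - 1) powr (- real j / (real j - 2))) < (tau0 j \<theta>)^2) sequentially"
      by (rule order_tendstoD(2))
    then show ?thesis by (rule eventually_mono) simp
  qed
  have "eventually (Kcond j \<theta>) sequentially"
    using eventually_conj[OF e1 eventually_conj[OF e2 eventually_conj[OF e3 e4]]]
    unfolding Kcond_def by simp
  then show ?thesis by (simp add: eventually_sequentially)
qed

theorem theorem7: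
  fixes j :: nat and \<theta> :: real
  assumes "j \<ge> 3" and "0 < \<theta>" and "\<theta> < 1"
  shows "\<exists>K::nat. \<forall>k\<ge>K.
    ((\<lambda>n. \<Sum>b=1..nat \<lfloor>\<theta> * beta_bar j * (real k - 1) powr (- real j / (real j - 2)) * real n\<rfloor>.
              \<Sum>a=0..n - b. E_val n j k a b)
      \<longlongrightarrow> 0) (inf sequentially (principal {n. k dvd n}))"
proof -
  obtain K where K: "\<forall>k\<ge>K. Kcond j \<theta> k" using K_exists[OF assms] by blast
  show ?thesis
  proof (intro exI allI impI)
    fix k assume "K \<le> k"
    then have Kc: "Kcond j \<theta> k" using K by simp
    define F where "F = inf sequentially (principal {n. k dvd n})"
    define f where "f = (\<lambda>n. \<Sum>b=1..nat \<lfloor>\<theta> * beta_bar j * (real k - 1) powr (- real j / (real j - 2)) * real n\<rfloor>.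
              \<Sum>a=0..n - b. E_val n j k a b)"
    have g: "((\<lambda>n::nat. Cf j \<theta> k * exp (- ln (real n) / 8)) \<longlongrightarrow> 0) sequentially" by real_asymp
    then have gF: "((\<lambda>n::nat. Cf j \<theta> k * exp (- ln (real n) / 8)) \<longlongrightarrow> 0) F"
      unfolding F_def by (rule tendsto_mono[rotated]) simp
    have ev1: "eventually (\<lambda>n. 0 \<le> f n) F" unfolding f_def by (intro always_eventually allI sum_nonneg_E)
    have ev2: "eventually (\<lambda>n. f n \<le> Cf j \<theta> k * exp (- ln (real n) / 8)) F"
      unfolding F_def eventually_inf_principal unfolding f_def
      by (intro always_eventually allI impI) (use sum_bound[OF assms Kc] in simp)
    have "(f \<longlongrightarrow> 0) F" by (rule tendsto_sandwich[OF ev1 ev2 tendsto_const gF])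
    then show "((\<lambda>n. \<Sum>b=1..nat \<lfloor>\<theta> * beta_bar j * (real k - 1) powr (- real j / (real j - 2)) * real n\<rfloor>.
              \<Sum>a=0..n - b. E_val n j k a b) \<longlongrightarrow> 0) (inf sequentially (principal {n. k dvd n}))"
      unfolding f_def F_def .
  qed
qed


end
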